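(* Let $\mathbb{T}$ be a geometric theory over $\Sigma$. Then the topological spaces $M_{\mathbb{T}}$ and $I_{\mathbb{T}}$ (with the logical topologies) are sober, i.e.\ every completely prime filter of open sets is the neighbourhood filter of a unique point.
   Context: Let $\Sigma$ be a single-sorted first-order signature with equality, $\kappa\geq|\Sigma|+\aleph_0$ an infinite cardinal, and $\mathbb{S}$ a fixed set of cardinality at least $\kappa$. An $\mathbb{S}$-indexed $\Sigma$-structure is one whose underlying set is a quotient $A/{\sim}$ of a subset $A\subseteq\mathbb{S}$ (elements $[a]$). $M_\Sigma$ is the set of all such structures and $I_\Sigma$ the set of all isomorphisms between them, with domain and codomain maps $d,c$. The logical topology on $M_\Sigma$ is the coarsest containing the sets $\{\mathbf{M}:[a]\in\mathbf{M}\}$ ($a\in\mathbb{S}$, meaning $a$ lies in the subset of which $\mathbf{M}$'s universe is a quotient), $\{\mathbf{M}:[\mathbf{a}]\in R^{\mathbf{M}}\}$ (each $n$-ary relation symbol $R$, including equality and nullary symbols, each $n$-tuple $\mathbf{a}$ from $\mathbb{S}$), and $\{\mathbf{M}:f^{\mathbf{M}}([\mathbf{a}])=[b]\}$ (each function symbol $f$). The logical topology on $I_\Sigma$ is the coarsest making $d,c$ continuous and containing all $\{\mathbf{f}:[a]\in d(\mathbf{f}),[b]\in c(\mathbf{f}),\mathbf{f}([a])=[b]\}$. $M_{\mathbb{T}}\subseteq M_\Sigma$ is the set of $\mathbb{S}$-indexed $\mathbb{T}$-models and $I_{\mathbb{T}}\subseteq I_\Sigma$ the isomorphisms between them, with subspace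 topologies. A completely prime filter of opens is a filter $F$ of open sets such that whenever a union $\bigcup\mathcal{S}$ of open sets lies in $F$, some member of $\mathcal{S}$ lies in $F$. *)

theory Defs
  imports "HOL-Analysis.Analysis"
begin

datatype 'f trm = Var nat | App 'f "'f trm list"

datatype ('r, 'f, 'i) gfm =
    GTop
  | GEq "'f trm" "'f trm"
  | GRel 'r "'f trm list"
  | GConj "('r, 'f, 'i) gfm" "('r, 'f, 'i) gfm"
  | GDisj "'i set" "'i \<Rightarrow> ('r, 'f, 'i) gfm"
  | GEx nat "('r, 'f, 'i) gfm"

fun fv_trm :: "'f trm \<Rightarrow> nat set" where
  "fv_trm (Var n) = {n}"
| "fv_trm (App f ts) = (\<Union>t\<in>set ts. fv_trm t)"

fun wf_trm :: "('f \<Rightarrow> nat) \<Rightarrow> 'f trm \<Rightarrow> bool" where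
  "wf_trm arF (Var n) = True"
| "wf_trm arF (App f ts) = (length ts = arF f \<and> (\<forall>t\<in>set ts. wf_trm arF t))"

primrec fv_fm :: "('r, 'f, 'i) gfm \<Rightarrow> nat set" where
  "fv_fm GTop = {}"
| "fv_fm (GEq t u) = fv_trm t \<union> fv_trm u"
| "fv_fm (GRel r ts) = (\<Union>t\<in>set ts. fv_trm t)"
| "fv_fm (GConj p q) = fv_fm p \<union> fv_fm q"
| "fv_fm (GDisj I F) = (\<Union>i\<in>I. fv_fm (F i))"
| "fv_fm (GEx x p) = fv_fm p - {x}"

primrec wf_fm :: "('r \<Rightarrow> nat) \<Rightarrow> ('f \<Rightarrow> nat) \<Rightarrow> ('r, 'f, 'i) gfm \<Rightarrow> bool" where
  "wf_fm arR arF GTop = True"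
| "wf_fm arR arF (GEq t u) = (wf_trm arF t \<and> wf_trm arF u)"
| "wf_fm arR arF (GRel r ts) = (length ts = arR r \<and> (\<forall>t\<in>set ts. wf_trm arF t))"
| "wf_fm arR arF (GConj p q) = (wf_fm arR arF p \<and> wf_fm arR arF q)"
| "wf_fm arR arF (GDisj I F) = (\<forall>i\<in>I. wf_fm arR arF (F i))"
| "wf_fm arR arF (GEx x p) = wf_fm arR arF p"

text \<open>A geometric sequent is a triple (context, antecedent, consequent); a geometric theory
  is a set of well-formed sequents whose free variables lie in the context.\<close>

type_synonym ('r, 'f, 'i) gseq = "nat list \<times> ('r, 'f, 'i) gfm \<times> ('r, 'f, 'i) gfm"

definition geometric_theory ::
  "('r \<Rightarrow> nat) \<Rightarrow> ('f \<Rightarrow> nat) \<Rightarrow> ('r, 'f, 'i) gseq set \<Rightarrow> bool" where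
  "geometric_theory arR arF T \<longleftrightarrow>
     (\<forall>(xs, p, q)\<in>T. wf_fm arR arF p \<and> wf_fm arR arF q \<and>
        fv_fm p \<union> fv_fm q \<subseteq> set xs)"

text \<open>An S-indexed structure: a subset A of S (idom), an equivalence relation on A (ieq);
  the elements are the classes [a]; relations are sets of tuples of classes, functions act
  on tuples of classes (and are canonically {} outside their domain).\<close>

record ('s, 'r, 'f) istr =
  idom :: "'s set"
  ieq  :: "'s rel"
  irel :: "'r \<Rightarrow> 's set list set"
  ifun :: "'f \<Rightarrow> 's set list \<Rightarrow> 's set"

definition univ :: "('s, 'r, 'f) istr \<Rightarrow> 's set set" where
  "univ M = idom M // ieq M"

definition cls :: "('s, 'r, 'f) istr \<Rightarrow> 's \<Rightarrow> 's set" where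
  "cls M a = ieq M `` {a}"

definition MSig :: "'s set \<Rightarrow> ('r \<Rightarrow> nat) \<Rightarrow> ('f \<Rightarrow> nat) \<Rightarrow> ('s, 'r, 'f) istr set" where
  "MSig S arR arF = {M. idom M \<subseteq> S \<and> equiv (idom M) (ieq M) \<and>
     (\<forall>r. irel M r \<subseteq> {xs. length xs = arR r \<and> set xs \<subseteq> univ M}) \<and>
     (\<forall>f xs. (length xs = arF f \<and> set xs \<subseteq> univ M \<longrightarrow> ifun M f xs \<in> univ M) \<and>
             (\<not> (length xs = arF f \<and> set xs \<subseteq> univ M) \<longrightarrow> ifun M f xs = {}))}"

record ('s, 'r, 'f) iiso =
  isrc :: "('s, 'r, 'f) istr"
  itgt :: "('s, 'r, 'f) istr"
  imap :: "'s set \<Rightarrow> 's set"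

definition is_iso :: "('r \<Rightarrow> nat) \<Rightarrow> ('f \<Rightarrow> nat) \<Rightarrow> ('s, 'r, 'f) istr \<Rightarrow> ('s, 'r, 'f) istr
    \<Rightarrow> ('s set \<Rightarrow> 's set) \<Rightarrow> bool" where
  "is_iso arR arF M N h \<longleftrightarrow>
     bij_betw h (univ M) (univ N) \<and> (\<forall>x. x \<notin> univ M \<longrightarrow> h x = {}) \<and>
     (\<forall>r xs. length xs = arR r \<and> set xs \<subseteq> univ M \<longrightarrow>
        (xs \<in> irel M r \<longleftrightarrow> map h xs \<in> irel N r)) \<and>
     (\<forall>f xs. length xs = arF f \<and> set xs \<subseteq> univ M \<longrightarrow>
        h (ifun M f xs) = ifun N f (map h xs))"

definition ISig_on :: "('s, 'r, 'f) istr set \<Rightarrow> ('r \<Rightarrow> nat) \<Rightarrow> ('f \<Rightarrow> nat)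
    \<Rightarrow> ('s, 'r, 'f) iiso set" where
  "ISig_on Ms arR arF = {g. isrc g \<in> Ms \<and> itgt g \<in> Ms \<and> is_iso arR arF (isrc g) (itgt g) (imap g)}"

abbreviation ISig :: "'s set \<Rightarrow> ('r \<Rightarrow> nat) \<Rightarrow> ('f \<Rightarrow> nat) \<Rightarrow> ('s, 'r, 'f) iiso set" where
  "ISig S arR arF \<equiv> ISig_on (MSig S arR arF) arR arF"

definition MSig_top :: "'s set \<Rightarrow> ('r \<Rightarrow> nat) \<Rightarrow> ('f \<Rightarrow> nat) \<Rightarrow> ('s, 'r, 'f) istr topology" where
  "MSig_top S arR arF = topology_generated_by
     ({MSig S arR arF}
      \<union> {{M \<in> MSig S arR arF. a \<in> idom M} | a. a \<in> S}
      \<union> {{M \<in> MSig S arR arF. a \<in> idom M \<and> b \<in> idom M \<and> (a, b) \<in> ieq M} | a b. a \<in> S \<and> b \<in> S}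
      \<union> {{M \<in> MSig S arR arF. set as \<subseteq> idom M \<and> map (cls M) as \<in> irel M r} | r as.
            length as = arR r \<and> set as \<subseteq> S}
      \<union> {{M \<in> MSig S arR arF. set as \<subseteq> idom M \<and> b \<in> idom M \<and> ifun M f (map (cls M) as) = cls M b}
            | f as b. length as = arF f \<and> set as \<subseteq> S \<and> b \<in> S})"

definition ISig_top :: "'s set \<Rightarrow> ('r \<Rightarrow> nat) \<Rightarrow> ('f \<Rightarrow> nat) \<Rightarrow> ('s, 'r, 'f) iiso topology" where
  "ISig_top S arR arF = topology_generated_by
     ({ISig S arR arF}
      \<union> {{g \<in> ISig S arR arF. isrc g \<in> U} | U. openin (MSig_top S arR arF) U}
      \<union> {{g \<in> ISig S arR arF. itgt g \<in> U} | U. openin (MSig_top S arR arF) U}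
      \<union> {{g \<in> ISig S arR arF. a \<in> idom (isrc g) \<and> b \<in> idom (itgt g) \<and>
              imap g (cls (isrc g) a) = cls (itgt g) b} | a b. a \<in> S \<and> b \<in> S})"

fun eval :: "('s, 'r, 'f) istr \<Rightarrow> (nat \<Rightarrow> 's set) \<Rightarrow> 'f trm \<Rightarrow> 's set" where
  "eval M v (Var n) = v n"
| "eval M v (App f ts) = ifun M f (map (eval M v) ts)"

primrec sat :: "('s, 'r, 'f) istr \<Rightarrow> (nat \<Rightarrow> 's set) \<Rightarrow> ('r, 'f, 'i) gfm \<Rightarrow> bool" where
  "sat M v GTop = True"
| "sat M v (GEq t u) = (eval M v t = eval M v u)"
| "sat M v (GRel r ts) = (map (eval M v) ts \<in> irel M r)"
| "sat M v (GConj p q) = (sat M v p \<and> sat M v q)"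
| "sat M v (GDisj I F) = (\<exists>i\<in>I. sat M v (F i))"
| "sat M v (GEx x p) = (\<exists>e\<in>univ M. sat M (v(x := e)) p)"

definition is_model :: "('s, 'r, 'f) istr \<Rightarrow> ('r, 'f, 'i) gseq set \<Rightarrow> bool" where
  "is_model M T \<longleftrightarrow>
     (\<forall>(xs, p, q)\<in>T. \<forall>v. (\<forall>x\<in>set xs. v x \<in> univ M) \<longrightarrow> sat M v p \<longrightarrow> sat M v q)"

definition MT :: "'s set \<Rightarrow> ('r \<Rightarrow> nat) \<Rightarrow> ('f \<Rightarrow> nat) \<Rightarrow> ('r, 'f, 'i) gseq set
    \<Rightarrow> ('s, 'r, 'f) istr set" where
  "MT S arR arF T = {M \<in> MSig S arR arF. is_model M T}"

definition IT :: "'s set \<Rightarrow> ('r \<Rightarrow> nat) \<Rightarrow> ('f \<Rightarrow> nat) \<Rightarrow> ('r, 'f, 'i) gseq set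
    \<Rightarrow> ('s, 'r, 'f) iiso set" where
  "IT S arR arF T = ISig_on (MT S arR arF T) arR arF"

definition completely_prime_filter :: "'a topology \<Rightarrow> 'a set set \<Rightarrow> bool" where
  "completely_prime_filter X F \<longleftrightarrow>
     F \<subseteq> {U. openin X U} \<and> topspace X \<in> F \<and>
     (\<forall>U V. U \<in> F \<longrightarrow> V \<in> F \<longrightarrow> U \<inter> V \<in> F) \<and>
     (\<forall>U V. U \<in> F \<longrightarrow> openin X V \<longrightarrow> U \<subseteq> V \<longrightarrow> V \<in> F) \<and>
     (\<forall>\<S>. (\<forall>U\<in>\<S>. openin X U) \<longrightarrow> \<Union>\<S> \<in> F \<longrightarrow> (\<exists>U\<in>\<S>. U \<in> F))"

definition sober :: "'a topology \<Rightarrow> bool" where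
  "sober X \<longleftrightarrow> (\<forall>F. completely_prime_filter X F \<longrightarrow>
     (\<exists>!x. x \<in> topspace X \<and> F = {U. openin X U \<and> x \<in> U}))"

end

theory Submission
  imports Defs
begin


lemma cpf_open: "completely_prime_filter X F \<Longrightarrow> U \<in> F \<Longrightarrow> openin X U"
  unfolding completely_prime_filter_def by auto
lemma cpf_top: "completely_prime_filter X F \<Longrightarrow> topspace X \<in> F"
  unfolding completely_prime_filter_def by auto
lemma cpf_int: "completely_prime_filter X F \<Longrightarrow> U \<in> F \<Longrightarrow> V \<in> F \<Longrightarrow> U \<inter> V \<in> F"
  unfolding completely_prime_filter_def by auto
lemma cpf_up: "completely_prime_filter X F \<Longrightarrow> U \<in> F \<Longrightarrow> openin X V \<Longrightarrow> U \<subseteq> V \<Longrightarrow> V \<in> F"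
  unfolding completely_prime_filter_def by auto
lemma cpf_cp: "completely_prime_filter X F \<Longrightarrow> (\<And>U. U \<in> SS \<Longrightarrow> openin X U) \<Longrightarrow> \<Union>SS \<in> F \<Longrightarrow> \<exists>U\<in>SS. U \<in> F"
  unfolding completely_prime_filter_def by auto
lemma cpf_empty: assumes "completely_prime_filter X F" shows "{} \<notin> F"
proof
  assume "{} \<in> F" then have "\<Union>{} \<in> F" by simp
  from cpf_cp[OF assms _ this] show False by simp
qed

definition rep :: "'a set \<Rightarrow> 'a" where "rep X = (SOME a. a \<in> X)"

lemma rep_quot:
  assumes "equiv A r" "X \<in> A // r"
  shows "rep X \<in> A" "r `` {rep X} = X"
proof -
  obtain a where X: "X = r `` {a}" "a \<in> A" using assms(2) by (rule quotientE)
  have "a \<in> X" using X equiv_class_self[OF assms(1)] by simp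
  then have rX: "rep X \<in> X" unfolding rep_def by (rule someI)
  then show "rep X \<in> A" using in_quotient_imp_subset[OF assms] by blast
  have "(a, rep X) \<in> r" using rX X by simp
  then have "r `` {a} = r `` {rep X}" by (rule equiv_class_eq[OF assms(1)])
  then show "r `` {rep X} = X" using X(1) by simp
qed

lemma MSig_D:
  assumes "N \<in> MSig S arR arF"
  shows "idom N \<subseteq> S" "equiv (idom N) (ieq N)"
    "\<And>r. irel N r \<subseteq> {xs. length xs = arR r \<and> set xs \<subseteq> univ N}"
    "\<And>f xs. length xs = arF f \<Longrightarrow> set xs \<subseteq> univ N \<Longrightarrow> ifun N f xs \<in> univ N"
    "\<And>f xs. \<not> (length xs = arF f \<and> set xs \<subseteq> univ N) \<Longrightarrow> ifun N f xs = {}"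
  using assms unfolding MSig_def by auto

lemma cls_eq_iff:
  "N \<in> MSig S arR arF \<Longrightarrow> a \<in> idom N \<Longrightarrow> b \<in> idom N \<Longrightarrow> cls N a = cls N b \<longleftrightarrow> (a, b) \<in> ieq N"
  unfolding cls_def using eq_equiv_class_iff MSig_D(2) by metis

lemma cls_univ: "N \<in> MSig S arR arF \<Longrightarrow> a \<in> idom N \<Longrightarrow> cls N a \<in> univ N"
  unfolding cls_def univ_def by (rule quotientI)

lemma rep_univ:
  assumes "N \<in> MSig S arR arF" "X \<in> univ N"
  shows "rep X \<in> idom N" "cls N (rep X) = X"
  using rep_quot[OF MSig_D(2)[OF assms(1)]] assms(2) unfolding univ_def cls_def by auto

lemma ieq_dom: "N \<in> MSig S arR arF \<Longrightarrow> (a, b) \<in> ieq N \<Longrightarrow> a \<in> idom N \<and> b \<in> idom N"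
  using MSig_D(2) unfolding equiv_def refl_on_def by blast

lemma MT_sub: "MT S arR arF T \<subseteq> MSig S arR arF"
  unfolding MT_def by auto

lemma topspace_MSig: "topspace (MSig_top S arR arF) = MSig S arR arF"
  unfolding MSig_top_def topology_generated_by_topspace by blast

lemma open_dom: "a \<in> S \<Longrightarrow> openin (MSig_top S arR arF) {M \<in> MSig S arR arF. a \<in> idom M}"
  unfolding MSig_top_def by (rule topology_generated_by_Basis) blast
lemma open_eq: "a \<in> S \<Longrightarrow> b \<in> S \<Longrightarrow> openin (MSig_top S arR arF)
   {M \<in> MSig S arR arF. a \<in> idom M \<and> b \<in> idom M \<and> (a, b) \<in> ieq M}"
  unfolding MSig_top_def by (rule topology_generated_by_Basis) blast
lemma open_rel: "length as = arR r \<Longrightarrow> set as \<subseteq> S \<Longrightarrow> openin (MSig_top S arR arF)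
   {M \<in> MSig S arR arF. set as \<subseteq> idom M \<and> map (cls M) as \<in> irel M r}"
  unfolding MSig_top_def by (rule topology_generated_by_Basis) blast
lemma open_fun: "length as = arF f \<Longrightarrow> set as \<subseteq> S \<Longrightarrow> b \<in> S \<Longrightarrow> openin (MSig_top S arR arF)
   {M \<in> MSig S arR arF. set as \<subseteq> idom M \<and> b \<in> idom M \<and> ifun M f (map (cls M) as) = cls M b}"
  unfolding MSig_top_def by (rule topology_generated_by_Basis) blast

lemma open_sub:
  assumes "openin (MSig_top S arR arF) {M \<in> MSig S arR arF. P M}"
  shows "openin (subtopology (MSig_top S arR arF) (MT S arR arF T)) {M \<in> MT S arR arF T. P M}"
proof -
  have "{M \<in> MT S arR arF T. P M} = {M \<in> MSig S arR arF. P M} \<inter> MT S arR arF T"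
    using MT_sub by blast
  then show ?thesis using openin_subtopology_Int[OF assms] by simp
qed

lemma topspace_XM: "topspace (subtopology (MSig_top S arR arF) (MT S arR arF T)) = MT S arR arF T"
  using MT_sub topspace_MSig by (metis inf.absorb_iff2 topspace_subtopology)


lemma sober_generated:
  assumes Y: "Y \<subseteq> \<Union>B"
    and t0: "\<And>x y. x \<in> Y \<Longrightarrow> y \<in> Y \<Longrightarrow> (\<forall>G\<in>B. x \<in> G \<longleftrightarrow> y \<in> G) \<Longrightarrow> x = y"
    and ex: "\<And>F. completely_prime_filter (subtopology (topology_generated_by B) Y) F
               \<Longrightarrow> \<exists>x\<in>Y. \<forall>G\<in>B. (G \<inter> Y \<in> F \<longleftrightarrow> x \<in> G)"
  shows "sober (subtopology (topology_generated_by B) Y)"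
  unfolding sober_def
proof (intro allI impI)
  let ?X = "subtopology (topology_generated_by B) Y"
  fix F assume cpf: "completely_prime_filter ?X F"
  have tsp: "topspace ?X = Y" using Y by auto
  note Fopen = cpf_open[OF cpf] and Fint = cpf_int[OF cpf] and Fup = cpf_up[OF cpf] and Fcp = cpf_cp[OF cpf]
  from ex[OF cpf] obtain x where xY: "x \<in> Y" and xG: "\<forall>G\<in>B. (G \<inter> Y \<in> F \<longleftrightarrow> x \<in> G)" by blast
  have emp: "{} \<notin> F" using cpf_empty[OF cpf] .
  have gopen: "generate_topology_on B V \<Longrightarrow> openin ?X (V \<inter> Y)" for V
    unfolding openin_subtopology openin_topology_generated_by_iff by blast
  have key: "generate_topology_on B V \<Longrightarrow> (V \<inter> Y \<in> F \<longleftrightarrow> x \<in> V)" for V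
  proof (induction rule: generate_topology_on.induct)
    case Empty then show ?case using emp by simp
  next
    case (Int a b)
    have oa: "openin ?X (a \<inter> Y)" and ob: "openin ?X (b \<inter> Y)"
      using Int.hyps gopen by auto
    have "a \<inter> b \<inter> Y = (a \<inter> Y) \<inter> (b \<inter> Y)" by blast
    moreover have "(a \<inter> Y) \<inter> (b \<inter> Y) \<in> F \<longleftrightarrow> a \<inter> Y \<in> F \<and> b \<inter> Y \<in> F"
      using Fint Fup[OF _ oa] Fup[OF _ ob] by blast
    ultimately show ?case using Int.IH by simp
  next
    case (UN K)
    have ok: "\<And>U. U \<in> (\<lambda>k. k \<inter> Y) ` K \<Longrightarrow> openin ?X U"
      using UN.hyps gopen by auto
    have eq: "\<Union>K \<inter> Y = \<Union>((\<lambda>k. k \<inter> Y) ` K)" by auto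
    show ?case
    proof
      assume "\<Union>K \<inter> Y \<in> F"
      then have "\<Union>((\<lambda>k. k \<inter> Y) ` K) \<in> F" unfolding eq .
      then have "\<exists>U\<in>(\<lambda>k. k \<inter> Y) ` K. U \<in> F" using Fcp[OF ok] by blast
      then obtain k where "k \<in> K" "k \<inter> Y \<in> F" by blast
      then show "x \<in> \<Union>K" using UN.IH by blast
    next
      assume "x \<in> \<Union>K"
      then obtain k where k: "k \<in> K" "x \<in> k" by blast
      then have "k \<inter> Y \<in> F" using UN.IH by blast
      moreover have "openin ?X (\<Union>K \<inter> Y)"
        using UN.hyps gopen generate_topology_on.UN by blast
      ultimately show "\<Union>K \<inter> Y \<in> F" using Fup k by blast
    qed
  next
    case (Basis s) then show ?case using xG by blast
  qed
  have Feq: "F = {U. openin ?X U \<and> x \<in> U}"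
  proof safe
    fix U assume "U \<in> F"
    then have "openin ?X U" using Fopen by blast
    then obtain V where "generate_topology_on B V" "U = V \<inter> Y"
      by (auto simp: openin_subtopology openin_topology_generated_by_iff)
    with key \<open>U \<in> F\<close> show "x \<in> U" using xY by blast
  next
    fix U assume "U \<in> F" then show "openin ?X U" using Fopen by blast
  next
    fix U assume "openin ?X U" "x \<in> U"
    then obtain V where "generate_topology_on B V" "U = V \<inter> Y"
      by (auto simp: openin_subtopology openin_topology_generated_by_iff)
    with key \<open>x \<in> U\<close> show "U \<in> F" by blast
  qed
  show "\<exists>!x. x \<in> topspace ?X \<and> F = {U. openin ?X U \<and> x \<in> U}"
  proof (rule ex1I[of _ x])
    show "x \<in> topspace ?X \<and> F = {U. openin ?X U \<and> x \<in> U}" using tsp xY Feq by simp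
  next
    fix y assume y: "y \<in> topspace ?X \<and> F = {U. openin ?X U \<and> y \<in> U}"
    have "\<forall>G\<in>B. x \<in> G \<longleftrightarrow> y \<in> G"
    proof
      fix G assume G: "G \<in> B"
      have "openin ?X (G \<inter> Y)"
        using G gopen generate_topology_on.Basis by blast
      then show "x \<in> G \<longleftrightarrow> y \<in> G" using y xG G tsp by auto
    qed
    then show "y = x" using t0 xY y tsp by metis
  qed
qed



locale MF =
  fixes S :: "'s set" and arR :: "'r \<Rightarrow> nat" and arF :: "'f \<Rightarrow> nat"
    and T :: "('r, 'f, 'i) gseq set" and F :: "('s, 'r, 'f) istr set set"
  assumes cpf: "completely_prime_filter (subtopology (MSig_top S arR arF) (MT S arR arF T)) F"
begin

abbreviation "XM \<equiv> subtopology (MSig_top S arR arF) (MT S arR arF T)"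
abbreviation "MTs \<equiv> MT S arR arF T"
abbreviation "MSg \<equiv> MSig S arR arF"

lemma MT_F: "MTs \<in> F" using cpf_top[OF cpf] topspace_XM by metis
lemma F_ne: "A \<in> F \<Longrightarrow> A \<noteq> {}" using cpf_empty[OF cpf] by blast
lemma Fint: "A \<in> F \<Longrightarrow> B \<in> F \<Longrightarrow> A \<inter> B \<in> F" by (rule cpf_int[OF cpf])
lemma Fup: "A \<in> F \<Longrightarrow> A \<subseteq> B \<Longrightarrow> openin XM B \<Longrightarrow> B \<in> F" using cpf_up[OF cpf] by blast
lemma Fopen: "A \<in> F \<Longrightarrow> openin XM A" by (rule cpf_open[OF cpf])
lemma Fcp: "(\<And>U. U \<in> SS \<Longrightarrow> openin XM U) \<Longrightarrow> \<Union>SS \<in> F \<Longrightarrow> \<exists>U\<in>SS. U \<in> F"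
  by (rule cpf_cp[OF cpf])
lemma FsubMT: "A \<in> F \<Longrightarrow> A \<subseteq> MTs"
  using Fopen openin_subset topspace_XM by metis

definition domset where "domset a = {N \<in> MTs. a \<in> idom N}"
definition eqset where "eqset a b = {N \<in> MTs. a \<in> idom N \<and> b \<in> idom N \<and> (a, b) \<in> ieq N}"
definition relset where "relset r as = {N \<in> MTs. set as \<subseteq> idom N \<and> map (cls N) as \<in> irel N r}"
definition fg where "fg f as b = {N \<in> MTs. set as \<subseteq> idom N \<and> b \<in> idom N \<and> ifun N f (map (cls N) as) = cls N b}"
definition dset where "dset as = {N \<in> MTs. set as \<subseteq> idom N}"
definition qset where "qset as as' = {N \<in> MTs. set as \<subseteq> idom N \<and> set as' \<subseteq> idom N \<and> map (cls N) as = map (cls N) as'}"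

lemma o_domset: "a \<in> S \<Longrightarrow> openin XM (domset a)"
  unfolding domset_def by (rule open_sub[OF open_dom])
lemma o_eqset: "a \<in> S \<Longrightarrow> b \<in> S \<Longrightarrow> openin XM (eqset a b)"
  unfolding eqset_def by (rule open_sub[OF open_eq])
lemma o_relset: "length as = arR r \<Longrightarrow> set as \<subseteq> S \<Longrightarrow> openin XM (relset r as)"
  unfolding relset_def by (rule open_sub[OF open_rel])
lemma o_fg: "length as = arF f \<Longrightarrow> set as \<subseteq> S \<Longrightarrow> b \<in> S \<Longrightarrow> openin XM (fg f as b)"
  unfolding fg_def by (rule open_sub[OF open_fun])

lemma MTsD: "N \<in> MTs \<Longrightarrow> N \<in> MSg" using MT_sub by blast

definition D where "D = {a \<in> S. domset a \<in> F}"
definition E where "E = {(a, b). a \<in> S \<and> b \<in> S \<and> eqset a b \<in> F}"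

lemma D_S: "D \<subseteq> S" unfolding D_def by blast

lemma E_D: assumes "(a, b) \<in> E" shows "a \<in> D" "b \<in> D"
proof -
  have ab: "a \<in> S" "b \<in> S" "eqset a b \<in> F" using assms unfolding E_def by auto
  have "eqset a b \<subseteq> domset a" "eqset a b \<subseteq> domset b" unfolding eqset_def domset_def by auto
  then show "a \<in> D" "b \<in> D" using Fup[OF ab(3)] o_domset ab unfolding D_def by auto
qed

lemma E_equiv: "equiv D E"
proof (rule equivI)
  show "E \<subseteq> D \<times> D" using E_D by auto
next
  show "refl_on D E"
  proof (rule refl_onI)
    fix a assume a: "a \<in> D"
    have "eqset a a = domset a" unfolding eqset_def domset_def
      using MSig_D(2)[OF MTsD] unfolding equiv_def refl_on_def by blast
    then show "(a, a) \<in> E" using a unfolding E_def D_def by auto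
  qed
next
  show "sym E" unfolding sym_def
  proof (intro allI impI)
    fix a b assume "(a, b) \<in> E"
    moreover have "eqset a b = eqset b a" unfolding eqset_def
      using MSig_D(2)[OF MTsD] unfolding equiv_def sym_def by blast
    ultimately show "(b, a) \<in> E" unfolding E_def by auto
  qed
next
  show "trans E" unfolding trans_def
  proof (intro allI impI)
    fix a b c assume ab: "(a, b) \<in> E" and bc: "(b, c) \<in> E"
    have "eqset a b \<inter> eqset b c \<subseteq> eqset a c" unfolding eqset_def
      using MSig_D(2)[OF MTsD] unfolding equiv_def trans_def by blast
    moreover have "eqset a b \<inter> eqset b c \<in> F" using ab bc Fint unfolding E_def by auto
    moreover have "a \<in> S" "c \<in> S" using ab bc unfolding E_def by auto
    ultimately show "(a, c) \<in> E" using Fup o_eqset unfolding E_def by blast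
  qed
qed

definition c0 where "c0 a = E `` {a}"

lemma c0_eq: "a \<in> D \<Longrightarrow> b \<in> D \<Longrightarrow> c0 a = c0 b \<longleftrightarrow> (a, b) \<in> E"
  unfolding c0_def using eq_equiv_class_iff[OF E_equiv] by blast

lemma dset_Cons: "dset (a # as) = domset a \<inter> dset as"
  unfolding dset_def domset_def by auto

lemma dset_F: "set as \<subseteq> D \<Longrightarrow> dset as \<in> F"
proof (induction as)
  case Nil then show ?case using MT_F unfolding dset_def by simp
next
  case (Cons a as)
  then show ?case using Fint unfolding dset_Cons D_def by auto
qed

lemma dset_open: "set as \<subseteq> S \<Longrightarrow> openin XM (dset as)"
proof (induction as)
  case Nil then show ?case using openin_topspace[of XM] unfolding dset_def topspace_XM by simp
next
  case (Cons a as)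
  then show ?case using o_domset unfolding dset_Cons by (simp add: openin_Int)
qed

lemma qset_Cons: "qset (a # as) (a' # as') = eqset a a' \<inter> qset as as'"
  unfolding qset_def eqset_def using cls_eq_iff[OF MTsD] by auto

lemma qset_F: "length as = length as' \<Longrightarrow> set as \<subseteq> D \<Longrightarrow> set as' \<subseteq> D \<Longrightarrow> map c0 as = map c0 as'
  \<Longrightarrow> qset as as' \<in> F"
proof (induction as arbitrary: as')
  case Nil then show ?case using MT_F unfolding qset_def by simp
next
  case (Cons a as)
  then obtain a' bs where as': "as' = a' # bs" by (cases as') auto
  have "(a, a') \<in> E" using Cons.prems c0_eq unfolding as' by auto
  then have "eqset a a' \<in> F" unfolding E_def by auto
  moreover have "qset as bs \<in> F" using Cons unfolding as' by auto
  ultimately show ?case unfolding as' qset_Cons using Fint by blast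
qed

end


context MF begin

lemma sub_D: "A \<in> F \<Longrightarrow> A \<subseteq> domset a \<Longrightarrow> a \<in> D"
proof -
  assume A: "A \<in> F" and sub: "A \<subseteq> domset a"
  obtain N where "N \<in> A" using F_ne[OF A] by blast
  then have "N \<in> MTs" "a \<in> idom N" using sub unfolding domset_def by auto
  then have aS: "a \<in> S" using MSig_D(1)[OF MTsD] by blast
  then have "domset a \<in> F" using Fup[OF A sub o_domset] by blast
  then show "a \<in> D" using aS unfolding D_def by blast
qed

lemma sub_Ds: "A \<in> F \<Longrightarrow> A \<subseteq> dset as \<Longrightarrow> set as \<subseteq> D"
proof
  fix a assume "A \<in> F" "A \<subseteq> dset as" "a \<in> set as"
  then have "A \<subseteq> domset a" unfolding dset_def domset_def by auto
  then show "a \<in> D" using sub_D \<open>A \<in> F\<close> by blast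
qed

definition R where "R r = {map c0 as | as. length as = arR r \<and> set as \<subseteq> D \<and> relset r as \<in> F}"

lemma rel_gen:
  assumes len: "length as = arR r" and aS: "set as \<subseteq> S"
  shows "relset r as \<in> F \<longleftrightarrow> set as \<subseteq> D \<and> map c0 as \<in> R r"
proof
  assume A: "relset r as \<in> F"
  have "relset r as \<subseteq> dset as" unfolding relset_def dset_def by auto
  then have "set as \<subseteq> D" using sub_Ds A by blast
  then show "set as \<subseteq> D \<and> map c0 as \<in> R r" using A len unfolding R_def by blast
next
  assume "set as \<subseteq> D \<and> map c0 as \<in> R r"
  then obtain as' where D1: "set as \<subseteq> D" and eq: "map c0 as = map c0 as'" and len': "length as' = arR r"
    and D2: "set as' \<subseteq> D" and A': "relset r as' \<in> F" unfolding R_def by auto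
  have "length as = length as'" using eq by (metis length_map)
  then have q: "qset as as' \<in> F" using qset_F D1 D2 eq by blast
  have "relset r as' \<inter> qset as as' \<subseteq> relset r as" unfolding relset_def qset_def by auto
  then show "relset r as \<in> F" using Fup[OF Fint[OF A' q]] o_relset[OF len aS] by blast
qed

lemma fg_ex:
  assumes len: "length as = arF f" and aD: "set as \<subseteq> D"
  shows "\<exists>b\<in>S. fg f as b \<in> F"
proof -
  have aS: "set as \<subseteq> S" using aD D_S by blast
  have eq: "dset as = \<Union> (fg f as ` S)"
  proof
    show "dset as \<subseteq> \<Union> (fg f as ` S)"
    proof
      fix N assume N: "N \<in> dset as"
      then have NM: "N \<in> MSg" and Nd: "set as \<subseteq> idom N" and NT: "N \<in> MTs"
        unfolding dset_def using MTsD by auto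
      have "set (map (cls N) as) \<subseteq> univ N" using cls_univ[OF NM] Nd by auto
      then have u: "ifun N f (map (cls N) as) \<in> univ N" using MSig_D(4)[OF NM] len by simp
      define b where "b = rep (ifun N f (map (cls N) as))"
      have b: "b \<in> idom N" "cls N b = ifun N f (map (cls N) as)"
        using rep_univ[OF NM u] unfolding b_def by auto
      then have "b \<in> S" using MSig_D(1)[OF NM] by blast
      moreover have "N \<in> fg f as b" using b Nd NT unfolding fg_def by auto
      ultimately show "N \<in> \<Union> (fg f as ` S)" by blast
    qed
  next
    show "\<Union> (fg f as ` S) \<subseteq> dset as" unfolding fg_def dset_def by auto
  qed
  have "\<Union> (fg f as ` S) \<in> F" using dset_F[OF aD] eq by simp
  moreover have "\<And>U. U \<in> fg f as ` S \<Longrightarrow> openin XM U" using o_fg[OF len aS] by blast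
  ultimately show ?thesis using Fcp by blast
qed

lemma fg_uniq:
  assumes A: "fg f as b \<in> F" and B: "fg f as' b' \<in> F" and Q: "qset as as' \<in> F"
  shows "(b, b') \<in> E"
proof -
  have "fg f as b \<subseteq> domset b" "fg f as' b' \<subseteq> domset b'" unfolding fg_def domset_def by auto
  then have bD: "b \<in> D" "b' \<in> D" using sub_D A B by blast+
  then have bS: "b \<in> S" "b' \<in> S" using D_S by blast+
  have "fg f as b \<inter> fg f as' b' \<inter> qset as as' \<subseteq> eqset b b'"
  proof
    fix N assume N: "N \<in> fg f as b \<inter> fg f as' b' \<inter> qset as as'"
    then have NM: "N \<in> MSg" using MTsD unfolding fg_def by auto
    from N have "cls N b = cls N b'" unfolding fg_def qset_def by auto
    then show "N \<in> eqset b b'" using N cls_eq_iff[OF NM] unfolding fg_def eqset_def by auto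
  qed
  then have "eqset b b' \<in> F" using Fup[OF Fint[OF Fint[OF A B] Q]] o_eqset[OF bS] by blast
  then show ?thesis using bS unfolding E_def by blast
qed

lemma c0_quot: "a \<in> D \<Longrightarrow> c0 a \<in> D // E"
  unfolding c0_def by (rule quotientI)

lemma rep_c0: "a \<in> D \<Longrightarrow> rep (c0 a) \<in> D \<and> c0 (rep (c0 a)) = c0 a"
  using rep_quot[OF E_equiv c0_quot] unfolding c0_def by blast

lemma reps_D: "set xs \<subseteq> D // E \<Longrightarrow> set (map rep xs) \<subseteq> D \<and> map c0 (map rep xs) = xs"
  using rep_quot[OF E_equiv] unfolding c0_def by (induction xs) auto

definition bsel where "bsel f as = (SOME b. b \<in> S \<and> fg f as b \<in> F)"

lemma bsel: assumes "length as = arF f" "set as \<subseteq> D" shows "bsel f as \<in> S \<and> fg f as (bsel f as) \<in> F"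
proof -
  obtain b where "b \<in> S \<and> fg f as b \<in> F" using fg_ex[OF assms] by blast
  then show ?thesis unfolding bsel_def by (rule someI)
qed

definition Fn where "Fn f xs = (if length xs = arF f \<and> set xs \<subseteq> D // E then c0 (bsel f (map rep xs)) else {})"

lemma fg_gen:
  assumes len: "length as = arF f" and aS: "set as \<subseteq> S" and bS: "b \<in> S"
  shows "fg f as b \<in> F \<longleftrightarrow> set as \<subseteq> D \<and> b \<in> D \<and> Fn f (map c0 as) = c0 b"
proof -
  have common: "Fn f (map c0 as) = c0 (bsel f as'') \<and> bsel f as'' \<in> S \<and> fg f as'' (bsel f as'') \<in> F
     \<and> qset as as'' \<in> F \<and> set as'' \<subseteq> D"
    if aD: "set as \<subseteq> D" and as''_def: "as'' = map rep (map c0 as)" for as''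
  proof -
    have q: "set (map c0 as) \<subseteq> D // E" using aD c0_quot by auto
    have r: "set as'' \<subseteq> D" "map c0 as'' = map c0 as" using reps_D[OF q] as''_def by auto
    have l: "length as'' = arF f" using len as''_def by simp
    have "Fn f (map c0 as) = c0 (bsel f as'')" unfolding Fn_def using q len as''_def by simp
    moreover have "qset as as'' \<in> F" using qset_F[OF _ aD r(1)] r(2) l len by simp
    ultimately show ?thesis using bsel[OF l r(1)] r(1) by blast
  qed
  define as'' where "as'' = map rep (map c0 as)"
  show ?thesis
  proof
    assume A: "fg f as b \<in> F"
    have "fg f as b \<subseteq> dset as" "fg f as b \<subseteq> domset b" unfolding fg_def dset_def domset_def by auto
    then have aD: "set as \<subseteq> D" and bD: "b \<in> D" using sub_Ds sub_D A by blast+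
    note c = common[OF aD as''_def]
    have "(b, bsel f as'') \<in> E" using fg_uniq[OF A _ ] c by blast
    then have "c0 b = c0 (bsel f as'')" using c0_eq E_D by blast
    then show "set as \<subseteq> D \<and> b \<in> D \<and> Fn f (map c0 as) = c0 b" using aD bD c by simp
  next
    assume H: "set as \<subseteq> D \<and> b \<in> D \<and> Fn f (map c0 as) = c0 b"
    note c = common[OF conjunct1[OF H] as''_def]
    define b'' where "b'' = bsel f as''"
    have b''D: "b'' \<in> D" using sub_D[of "fg f as'' b''" b''] c unfolding b''_def fg_def domset_def by blast
    have "c0 b'' = c0 b" using H c unfolding b''_def by simp
    then have "(b'', b) \<in> E" using c0_eq b''D H by blast
    then have e: "eqset b'' b \<in> F" unfolding E_def by blast
    have "fg f as'' b'' \<inter> qset as as'' \<inter> eqset b'' b \<subseteq> fg f as b"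
    proof
      fix N assume N: "N \<in> fg f as'' b'' \<inter> qset as as'' \<inter> eqset b'' b"
      then have NM: "N \<in> MSg" using MTsD unfolding fg_def by auto
      from N have "cls N b'' = cls N b" using cls_eq_iff[OF NM] unfolding eqset_def by auto
      with N show "N \<in> fg f as b" unfolding fg_def qset_def eqset_def by auto
    qed
    moreover have "fg f as'' b'' \<inter> qset as as'' \<inter> eqset b'' b \<in> F"
      using c e Fint unfolding b''_def by blast
    ultimately show "fg f as b \<in> F" using Fup o_fg[OF len aS bS] by blast
  qed
qed

definition M0 :: "('s, 'r, 'f) istr" where "M0 = \<lparr>idom = D, ieq = E, irel = R, ifun = Fn\<rparr>"

lemma M0_simps [simp]: "idom M0 = D" "ieq M0 = E" "irel M0 = R" "ifun M0 = Fn"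
  unfolding M0_def by simp_all

lemma univ_M0: "univ M0 = D // E" unfolding univ_def by simp
lemma cls_M0: "cls M0 = c0" unfolding cls_def c0_def by (rule ext) simp

lemma M0_MSig: "M0 \<in> MSg"
proof -
  have "R r \<subseteq> {xs. length xs = arR r \<and> set xs \<subseteq> univ M0}" for r
  proof
    fix xs assume "xs \<in> R r"
    then obtain as where "xs = map c0 as" "length as = arR r" "set as \<subseteq> D" unfolding R_def by blast
    then show "xs \<in> {xs. length xs = arR r \<and> set xs \<subseteq> univ M0}" unfolding univ_M0 using c0_quot by auto
  qed
  moreover have "Fn f xs \<in> univ M0" if "length xs = arF f" "set xs \<subseteq> univ M0" for f xs
  proof -
    have q: "set xs \<subseteq> D // E" using that univ_M0 by simp
    have r: "set (map rep xs) \<subseteq> D" using reps_D[OF q] by blast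
    have b: "fg f (map rep xs) (bsel f (map rep xs)) \<in> F" using bsel[OF _ r] that by simp
    have "bsel f (map rep xs) \<in> D" using sub_D[OF b] unfolding fg_def domset_def by blast
    then show ?thesis using that q c0_quot univ_M0 unfolding Fn_def by simp
  qed
  moreover have "Fn f xs = {}" if "\<not> (length xs = arF f \<and> set xs \<subseteq> univ M0)" for f xs
    using that univ_M0 unfolding Fn_def by auto
  ultimately show ?thesis unfolding MSig_def using D_S E_equiv by simp
qed

end


definition cv :: "('s, 'r, 'f) istr \<Rightarrow> (nat \<Rightarrow> 's) \<Rightarrow> nat \<Rightarrow> 's set" where
  "cv N w = (\<lambda>x. cls N (w x))"
lemma cv_apply: "cv N w x = cls N (w x)" unfolding cv_def by simp

lemma eval_univ:
  assumes NM: "N \<in> MSig S arR arF"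
  shows "wf_trm arF t \<Longrightarrow> fv_trm t \<subseteq> V \<Longrightarrow> w ` V \<subseteq> idom N \<Longrightarrow> eval N (cv N w) t \<in> univ N"
proof (induction t)
  case (Var n) then show ?case using cls_univ[OF NM] by (auto simp: cv_apply)
next
  case (App f ts)
  have "set (map (eval N (cv N w)) ts) \<subseteq> univ N" using App by auto
  then show ?case using MSig_D(4)[OF NM] App.prems by simp
qed

context MF begin

definition v0 where "v0 w = (\<lambda>x. c0 (w x))"
lemma v0_apply: "v0 w x = c0 (w x)" unfolding v0_def by simp
lemma cv_M0: "cv M0 w = v0 w" unfolding cv_def v0_def cls_M0 ..

definition W where "W V w = {N \<in> MTs. w ` V \<subseteq> idom N}"
definition TE where "TE V w t b = {N \<in> MTs. w ` V \<subseteq> idom N \<and> b \<in> idom N \<and> eval N (cv N w) t = cls N b}"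
definition TEs where "TEs V w ts bs = {N \<in> MTs. w ` V \<subseteq> idom N \<and> set bs \<subseteq> idom N \<and>
   map (eval N (cv N w)) ts = map (cls N) bs}"
definition Ext where "Ext V w \<phi> = {N \<in> MTs. w ` V \<subseteq> idom N \<and> sat N (cv N w) \<phi>}"

lemma W_insert: "W (insert x V) w = domset (w x) \<inter> W V w"
  unfolding W_def domset_def by auto

lemma W_open: "finite V \<Longrightarrow> w ` V \<subseteq> S \<Longrightarrow> openin XM (W V w)"
proof (induction V rule: finite_induct)
  case empty then show ?case using openin_topspace[of XM] unfolding W_def topspace_XM by simp
next
  case (insert x V) then show ?case unfolding W_insert using o_domset by (simp add: openin_Int)
qed

lemma W_F: "finite V \<Longrightarrow> w ` V \<subseteq> D \<Longrightarrow> W V w \<in> F"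
proof (induction V rule: finite_induct)
  case empty then show ?case using MT_F unfolding W_def by simp
next
  case (insert x V) then show ?case unfolding W_insert using Fint unfolding D_def by auto
qed

lemma Fint_iff: "openin XM A \<Longrightarrow> openin XM B \<Longrightarrow> A \<inter> B \<in> F \<longleftrightarrow> A \<in> F \<and> B \<in> F"
  using Fint Fup by (meson inf_le1 inf_le2)

lemma eval0: "wf_trm arF t \<Longrightarrow> fv_trm t \<subseteq> V \<Longrightarrow> w ` V \<subseteq> D \<Longrightarrow> eval M0 (v0 w) t \<in> D // E"
  using eval_univ[OF M0_MSig, of t V w] unfolding cv_M0 univ_M0 by simp

lemma mapreps: "set (map g ts) \<subseteq> D // E \<Longrightarrow> \<exists>bs. length bs = length ts \<and> set bs \<subseteq> D \<and> map g ts = map c0 bs"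
  using reps_D[of "map g ts"] by (intro exI[of _ "map rep (map g ts)"]) auto

abbreviation "PT V w t \<equiv> (\<forall>b\<in>S. openin XM (TE V w t b)) \<and>
   (w ` V \<subseteq> D \<longrightarrow> (\<forall>b\<in>S. TE V w t b \<in> F \<longleftrightarrow> b \<in> D \<and> eval M0 (v0 w) t = c0 b))"

lemma TEs_lemma:
  assumes IH: "\<forall>t\<in>set ts. PT V w t" and fin: "finite V" and wS: "w ` V \<subseteq> S"
  shows "length bs = length ts \<Longrightarrow> set bs \<subseteq> S \<Longrightarrow> openin XM (TEs V w ts bs) \<and>
    (w ` V \<subseteq> D \<longrightarrow> (TEs V w ts bs \<in> F \<longleftrightarrow> set bs \<subseteq> D \<and> map (eval M0 (v0 w)) ts = map c0 bs))"
  using IH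
proof (induction ts arbitrary: bs)
  case Nil
  then have "TEs V w [] bs = W V w" unfolding TEs_def W_def by simp
  then show ?case using W_open[OF fin wS] W_F[OF fin] Nil by simp
next
  case (Cons t ts)
  then obtain b bs' where bs: "bs = b # bs'" by (cases bs) auto
  have eq: "TEs V w (t # ts) bs = TE V w t b \<inter> TEs V w ts bs'"
    unfolding bs TEs_def TE_def by auto
  have IHt: "PT V w t" using Cons.prems(3) by (rule bspec) simp
  have IHs: "openin XM (TEs V w ts bs') \<and>
    (w ` V \<subseteq> D \<longrightarrow> (TEs V w ts bs' \<in> F \<longleftrightarrow> set bs' \<subseteq> D \<and> map (eval M0 (v0 w)) ts = map c0 bs'))"
    using Cons.IH Cons.prems bs by simp
  have bS: "b \<in> S" using Cons.prems bs by simp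
  have o: "openin XM (TE V w t b)" using IHt bS by blast
  show ?case
  proof
    show "openin XM (TEs V w (t # ts) bs)" unfolding eq using o IHs by (simp add: openin_Int)
  next
    show "w ` V \<subseteq> D \<longrightarrow> (TEs V w (t # ts) bs \<in> F \<longleftrightarrow> set bs \<subseteq> D \<and> map (eval M0 (v0 w)) (t # ts) = map c0 bs)"
    proof
      assume wD: "w ` V \<subseteq> D"
      have "TEs V w (t # ts) bs \<in> F \<longleftrightarrow> TE V w t b \<in> F \<and> TEs V w ts bs' \<in> F"
        unfolding eq using Fint_iff o IHs by blast
      also have "\<dots> \<longleftrightarrow> (b \<in> D \<and> eval M0 (v0 w) t = c0 b) \<and> (set bs' \<subseteq> D \<and> map (eval M0 (v0 w)) ts = map c0 bs')"
        using IHt IHs wD bS by blast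
      finally show "TEs V w (t # ts) bs \<in> F \<longleftrightarrow> set bs \<subseteq> D \<and> map (eval M0 (v0 w)) (t # ts) = map c0 bs"
        unfolding bs by auto
    qed
  qed
qed

lemma TE_lemma:
  "wf_trm arF t \<Longrightarrow> fv_trm t \<subseteq> V \<Longrightarrow> finite V \<Longrightarrow> w ` V \<subseteq> S \<Longrightarrow> PT V w t"
proof (induction t)
  case (Var n)
  have nV: "n \<in> V" using Var by simp
  have eq: "TE V w (Var n) b = W V w \<inter> eqset (w n) b" for b
    unfolding TE_def W_def eqset_def using cls_eq_iff[OF MTsD] nV by (auto simp: cv_apply)
  have wn: "w n \<in> S" using Var nV by auto
  show ?case
  proof (intro conjI ballI impI)
    fix b assume "b \<in> S"
    then show "openin XM (TE V w (Var n) b)" unfolding eq using W_open[OF Var(3,4)] o_eqset wn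
      by (simp add: openin_Int)
  next
    fix b assume wD: "w ` V \<subseteq> D" and bS: "b \<in> S"
    have wnD: "w n \<in> D" using wD nV by auto
    have "TE V w (Var n) b \<in> F \<longleftrightarrow> eqset (w n) b \<in> F"
      unfolding eq using Fint_iff W_open[OF Var(3,4)] o_eqset[OF wn bS] W_F[OF Var(3) wD] by blast
    also have "\<dots> \<longleftrightarrow> (w n, b) \<in> E" using wn bS unfolding E_def by blast
    also have "\<dots> \<longleftrightarrow> b \<in> D \<and> c0 (w n) = c0 b" using c0_eq E_D wnD by blast
    finally show "TE V w (Var n) b \<in> F \<longleftrightarrow> b \<in> D \<and> eval M0 (v0 w) (Var n) = c0 b" by (simp add: v0_apply)
  qed
next
  case (App f ts)
  have len: "length ts = arF f" and wfs: "\<And>t. t \<in> set ts \<Longrightarrow> wf_trm arF t" using App.prems by auto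
  have fvs: "\<And>t. t \<in> set ts \<Longrightarrow> fv_trm t \<subseteq> V" using App.prems by auto
  have IH: "\<forall>t\<in>set ts. PT V w t" using App.IH wfs fvs App.prems(3,4) by blast
  note TEs = TEs_lemma[where ts=ts and V=V and w=w, OF IH App.prems(3,4)]
  define Bs where "Bs = {bs. length bs = arF f \<and> set bs \<subseteq> S}"
  have eq: "TE V w (App f ts) b = \<Union> ((\<lambda>bs. TEs V w ts bs \<inter> fg f bs b) ` Bs)" for b
  proof
    show "TE V w (App f ts) b \<subseteq> \<Union> ((\<lambda>bs. TEs V w ts bs \<inter> fg f bs b) ` Bs)"
    proof
      fix N assume N: "N \<in> TE V w (App f ts) b"
      then have NM: "N \<in> MSg" and NT: "N \<in> MTs" and wN: "w ` V \<subseteq> idom N" and bN: "b \<in> idom N"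
        and ev: "ifun N f (map (eval N (cv N w)) ts) = cls N b"
        unfolding TE_def using MTsD by auto
      have u: "\<And>t. t \<in> set ts \<Longrightarrow> eval N (cv N w) t \<in> univ N"
        using eval_univ[OF NM] wfs fvs wN by blast
      define bs where "bs = map (\<lambda>t. rep (eval N (cv N w) t)) ts"
      have bsN: "set bs \<subseteq> idom N" using rep_univ(1)[OF NM u] unfolding bs_def by auto
      have bsc: "map (cls N) bs = map (eval N (cv N w)) ts"
        using rep_univ(2)[OF NM u] unfolding bs_def by auto
      have "bs \<in> Bs" using bsN MSig_D(1)[OF NM] len unfolding Bs_def bs_def by auto
      moreover have "N \<in> TEs V w ts bs" using NT wN bsN bsc unfolding TEs_def by auto
      moreover have "N \<in> fg f bs b" using NT bsN bN ev bsc unfolding fg_def by auto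
      ultimately show "N \<in> \<Union> ((\<lambda>bs. TEs V w ts bs \<inter> fg f bs b) ` Bs)" by blast
    qed
  next
    show "\<Union> ((\<lambda>bs. TEs V w ts bs \<inter> fg f bs b) ` Bs) \<subseteq> TE V w (App f ts) b"
      unfolding TEs_def fg_def TE_def by auto
  qed
  have oparts: "openin XM (TEs V w ts bs \<inter> fg f bs b)" if "bs \<in> Bs" "b \<in> S" for bs b
    using TEs[where bs=bs] o_fg[of bs f b] that len unfolding Bs_def by (simp add: openin_Int)
  show ?case
  proof (intro conjI ballI impI)
    fix b assume "b \<in> S"
    then show "openin XM (TE V w (App f ts) b)" unfolding eq using oparts by (intro openin_Union) blast
  next
    fix b assume wD: "w ` V \<subseteq> D" and bS: "b \<in> S"
    have "TE V w (App f ts) b \<in> F \<longleftrightarrow> (\<exists>bs\<in>Bs. TEs V w ts bs \<inter> fg f bs b \<in> F)"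
    proof
      assume "TE V w (App f ts) b \<in> F"
      then have "\<Union> ((\<lambda>bs. TEs V w ts bs \<inter> fg f bs b) ` Bs) \<in> F" unfolding eq .
      moreover have "\<And>U. U \<in> (\<lambda>bs. TEs V w ts bs \<inter> fg f bs b) ` Bs \<Longrightarrow> openin XM U"
        using oparts bS by blast
      ultimately have "\<exists>U\<in>(\<lambda>bs. TEs V w ts bs \<inter> fg f bs b) ` Bs. U \<in> F" using Fcp by blast
      then show "\<exists>bs\<in>Bs. TEs V w ts bs \<inter> fg f bs b \<in> F" by auto
    next
      assume "\<exists>bs\<in>Bs. TEs V w ts bs \<inter> fg f bs b \<in> F"
      then obtain bs where bs: "bs \<in> Bs" "TEs V w ts bs \<inter> fg f bs b \<in> F" by blast
      have o: "openin XM (TE V w (App f ts) b)" unfolding eq using oparts bS by (intro openin_Union) blast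
      have "TEs V w ts bs \<inter> fg f bs b \<subseteq> TE V w (App f ts) b" unfolding eq using bs(1) by blast
      then show "TE V w (App f ts) b \<in> F" using Fup[OF bs(2) _ o] by blast
    qed
    also have "\<dots> \<longleftrightarrow> (\<exists>bs\<in>Bs. (set bs \<subseteq> D \<and> map (eval M0 (v0 w)) ts = map c0 bs) \<and> (b \<in> D \<and> Fn f (map c0 bs) = c0 b))"
    proof -
      have "TEs V w ts bs \<inter> fg f bs b \<in> F \<longleftrightarrow> (set bs \<subseteq> D \<and> map (eval M0 (v0 w)) ts = map c0 bs) \<and> (b \<in> D \<and> Fn f (map c0 bs) = c0 b)"
        if bs: "bs \<in> Bs" for bs
      proof -
        have l: "length bs = length ts" "set bs \<subseteq> S" "length bs = arF f" using bs len unfolding Bs_def by auto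
        have "TEs V w ts bs \<inter> fg f bs b \<in> F \<longleftrightarrow> TEs V w ts bs \<in> F \<and> fg f bs b \<in> F"
          using Fint_iff TEs[OF l(1,2)] o_fg[OF l(3,2) bS] by blast
        then show ?thesis using TEs[OF l(1,2)] wD fg_gen[OF l(3,2) bS] by blast
      qed
      then show ?thesis by blast
    qed
    also have "\<dots> \<longleftrightarrow> b \<in> D \<and> eval M0 (v0 w) (App f ts) = c0 b"
    proof
      assume "\<exists>bs\<in>Bs. (set bs \<subseteq> D \<and> map (eval M0 (v0 w)) ts = map c0 bs) \<and> (b \<in> D \<and> Fn f (map c0 bs) = c0 b)"
      then show "b \<in> D \<and> eval M0 (v0 w) (App f ts) = c0 b" by auto
    next
      assume H: "b \<in> D \<and> eval M0 (v0 w) (App f ts) = c0 b"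
      have "set (map (eval M0 (v0 w)) ts) \<subseteq> D // E"
      proof
        fix X assume "X \<in> set (map (eval M0 (v0 w)) ts)"
        then obtain t where t: "t \<in> set ts" "X = eval M0 (v0 w) t" by auto
        show "X \<in> D // E" unfolding t(2) by (rule eval0[OF wfs[OF t(1)] fvs[OF t(1)] wD])
      qed
      then obtain bs where bs: "length bs = length ts" "set bs \<subseteq> D" "map (eval M0 (v0 w)) ts = map c0 bs"
        using mapreps by blast
      have "bs \<in> Bs" using bs len D_S unfolding Bs_def by auto
      then show "\<exists>bs\<in>Bs. (set bs \<subseteq> D \<and> map (eval M0 (v0 w)) ts = map c0 bs) \<and> (b \<in> D \<and> Fn f (map c0 bs) = c0 b)"
        using bs H by (intro bexI[of _ bs]) (auto simp: bs(3)[symmetric])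
    qed
    finally show "TE V w (App f ts) b \<in> F \<longleftrightarrow> b \<in> D \<and> eval M0 (v0 w) (App f ts) = c0 b" .
  qed
qed

end


lemma eval_cong: "(\<And>x. x \<in> fv_trm t \<Longrightarrow> v x = v' x) \<Longrightarrow> eval M v t = eval M v' t"
proof (induction t)
  case (App f ts)
  have "\<forall>t\<in>set ts. eval M v t = eval M v' t"
  proof
    fix t assume t: "t \<in> set ts"
    show "eval M v t = eval M v' t" by (rule App.IH[OF t]) (use App.prems t in auto)
  qed
  then have m: "map (eval M v) ts = map (eval M v') ts" unfolding map_eq_conv .
  show ?case by (simp only: eval.simps m)
qed simp

lemma sat_cong: "(\<And>x. x \<in> fv_fm \<phi> \<Longrightarrow> v x = v' x) \<Longrightarrow> sat M v \<phi> = sat M v' \<phi>"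
proof (induction \<phi> arbitrary: v v')
  case (GEq t u) then show ?case using eval_cong[of t v v' M] eval_cong[of u v v' M] by auto
next
  case (GRel r ts)
  have "\<forall>t\<in>set ts. eval M v t = eval M v' t"
  proof
    fix t assume t: "t \<in> set ts"
    show "eval M v t = eval M v' t" by (rule eval_cong) (use GRel.prems t in auto)
  qed
  then have m: "map (eval M v) ts = map (eval M v') ts" unfolding map_eq_conv .
  show ?case by (simp only: sat.simps m)
next
  case (GConj p q)
  have "sat M v p = sat M v' p" by (rule GConj.IH(1)) (use GConj.prems in auto)
  moreover have "sat M v q = sat M v' q" by (rule GConj.IH(2)) (use GConj.prems in auto)
  ultimately show ?case by simp
next
  case (GDisj I Fs)
  have "\<And>i. i \<in> I \<Longrightarrow> sat M v (Fs i) = sat M v' (Fs i)"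
  proof -
    fix i assume i: "i \<in> I"
    show "sat M v (Fs i) = sat M v' (Fs i)" by (rule GDisj.IH[OF rangeI]) (use GDisj.prems i in auto)
  qed
  then show ?case by simp
next
  case (GEx x p)
  have "\<And>e. sat M (v(x := e)) p = sat M (v'(x := e)) p"
  proof -
    fix e
    show "sat M (v(x := e)) p = sat M (v'(x := e)) p" by (rule GEx.IH) (use GEx.prems in auto)
  qed
  then show ?case by simp
qed simp

context MF begin

lemma UF:
  assumes "\<And>b. b \<in> A \<Longrightarrow> openin XM (U b)"
  shows "\<Union> (U ` A) \<in> F \<longleftrightarrow> (\<exists>b\<in>A. U b \<in> F)" "openin XM (\<Union> (U ` A))"
proof -
  show o: "openin XM (\<Union> (U ` A))" using assms by (intro openin_Union) blast
  show "\<Union> (U ` A) \<in> F \<longleftrightarrow> (\<exists>b\<in>A. U b \<in> F)"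
  proof
    assume "\<Union> (U ` A) \<in> F"
    moreover have "\<And>V. V \<in> U ` A \<Longrightarrow> openin XM V" using assms by blast
    ultimately have "\<exists>V\<in>U ` A. V \<in> F" using Fcp by blast
    then show "\<exists>b\<in>A. U b \<in> F" by auto
  next
    assume "\<exists>b\<in>A. U b \<in> F"
    then obtain b where b: "b \<in> A" "U b \<in> F" by blast
    have "U b \<subseteq> \<Union> (U ` A)" using b(1) by blast
    then show "\<Union> (U ` A) \<in> F" using Fup[OF b(2) _ o] by blast
  qed
qed

lemma quot_rep: "X \<in> D // E \<Longrightarrow> rep X \<in> D \<and> c0 (rep X) = X"
  using rep_quot[OF E_equiv] unfolding c0_def by blast

abbreviation "PF V w \<phi> \<equiv> openin XM (Ext V w \<phi>) \<and> (w ` V \<subseteq> D \<longrightarrow> (Ext V w \<phi> \<in> F \<longleftrightarrow> sat M0 (v0 w) \<phi>))"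

lemma Ext_lemma:
  "wf_fm arR arF \<phi> \<Longrightarrow> fv_fm \<phi> \<subseteq> V \<Longrightarrow> finite V \<Longrightarrow> w ` V \<subseteq> S \<Longrightarrow> PF V w \<phi>"
proof (induction \<phi> arbitrary: V w)
  case GTop
  have eq: "Ext V w GTop = W V w" unfolding Ext_def W_def by simp
  show ?case unfolding eq using W_open[OF GTop(3,4)] W_F[OF GTop(3)] by simp
next
  case (GEq t u)
  have PTt: "PT V w t" by (rule TE_lemma) (use GEq in auto)
  have PTu: "PT V w u" by (rule TE_lemma) (use GEq in auto)
  define U where "U b = TE V w t b \<inter> TE V w u b" for b
  have oU: "\<And>b. b \<in> S \<Longrightarrow> openin XM (U b)" unfolding U_def using PTt PTu by (simp add: openin_Int)
  have eq: "Ext V w (GEq t u) = \<Union> (U ` S)"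
  proof
    show "Ext V w (GEq t u) \<subseteq> \<Union> (U ` S)"
    proof
      fix N assume N: "N \<in> Ext V w (GEq t u)"
      then have NM: "N \<in> MSg" and NT: "N \<in> MTs" and wN: "w ` V \<subseteq> idom N"
        and ev: "eval N (cv N w) t = eval N (cv N w) u" unfolding Ext_def using MTsD by auto
      have u: "eval N (cv N w) t \<in> univ N" using eval_univ[OF NM] GEq wN by auto
      define b where "b = rep (eval N (cv N w) t)"
      have b: "b \<in> idom N" "cls N b = eval N (cv N w) t" using rep_univ[OF NM u] unfolding b_def by auto
      then have "b \<in> S" using MSig_D(1)[OF NM] by blast
      moreover have "N \<in> U b" using NT wN b ev unfolding U_def TE_def by auto
      ultimately show "N \<in> \<Union> (U ` S)" by blast
    qed
  next
    show "\<Union> (U ` S) \<subseteq> Ext V w (GEq t u)" unfolding U_def TE_def Ext_def by auto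
  qed
  show ?case
  proof
    show "openin XM (Ext V w (GEq t u))" unfolding eq using UF(2)[OF oU] .
  next
    show "w ` V \<subseteq> D \<longrightarrow> (Ext V w (GEq t u) \<in> F \<longleftrightarrow> sat M0 (v0 w) (GEq t u))"
    proof
      assume wD: "w ` V \<subseteq> D"
      have "Ext V w (GEq t u) \<in> F \<longleftrightarrow> (\<exists>b\<in>S. U b \<in> F)" unfolding eq using UF(1)[OF oU] .
      also have "\<dots> \<longleftrightarrow> (\<exists>b\<in>S. (b \<in> D \<and> eval M0 (v0 w) t = c0 b) \<and> (b \<in> D \<and> eval M0 (v0 w) u = c0 b))"
      proof -
        have "U b \<in> F \<longleftrightarrow> (b \<in> D \<and> eval M0 (v0 w) t = c0 b) \<and> (b \<in> D \<and> eval M0 (v0 w) u = c0 b)"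
          if "b \<in> S" for b
          using Fint_iff[of "TE V w t b" "TE V w u b"] PTt PTu wD that unfolding U_def by blast
        then show ?thesis by blast
      qed
      also have "\<dots> \<longleftrightarrow> eval M0 (v0 w) t = eval M0 (v0 w) u"
      proof
        assume "eval M0 (v0 w) t = eval M0 (v0 w) u"
        moreover have "eval M0 (v0 w) t \<in> D // E" using eval0 GEq wD by auto
        ultimately show "\<exists>b\<in>S. (b \<in> D \<and> eval M0 (v0 w) t = c0 b) \<and> (b \<in> D \<and> eval M0 (v0 w) u = c0 b)"
          using quot_rep D_S by (metis subsetD)
      qed auto
      finally show "Ext V w (GEq t u) \<in> F \<longleftrightarrow> sat M0 (v0 w) (GEq t u)" by simp
    qed
  qed
next
  case (GRel r ts)
  have len: "length ts = arR r" and wfs: "\<And>t. t \<in> set ts \<Longrightarrow> wf_trm arF t"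
    and fvs: "\<And>t. t \<in> set ts \<Longrightarrow> fv_trm t \<subseteq> V" using GRel by auto
  have IH: "\<forall>t\<in>set ts. PT V w t"
  proof
    fix t assume t: "t \<in> set ts"
    show "PT V w t" by (rule TE_lemma[OF wfs[OF t] fvs[OF t] GRel(3,4)])
  qed
  note TEs = TEs_lemma[where ts=ts and V=V and w=w, OF IH GRel(3,4)]
  define Bs where "Bs = {bs. length bs = arR r \<and> set bs \<subseteq> S}"
  define U where "U bs = TEs V w ts bs \<inter> relset r bs" for bs
  have oU: "openin XM (U bs)" if bs: "bs \<in> Bs" for bs
  proof -
    have l: "length bs = length ts" "set bs \<subseteq> S" "length bs = arR r" using bs len unfolding Bs_def by auto
    have "openin XM (TEs V w ts bs)" using TEs[OF l(1,2)] by blast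
    then show ?thesis unfolding U_def using o_relset[OF l(3,2)] by (rule openin_Int)
  qed
  have eq: "Ext V w (GRel r ts) = \<Union> (U ` Bs)"
  proof
    show "Ext V w (GRel r ts) \<subseteq> \<Union> (U ` Bs)"
    proof
      fix N assume N: "N \<in> Ext V w (GRel r ts)"
      then have NM: "N \<in> MSg" and NT: "N \<in> MTs" and wN: "w ` V \<subseteq> idom N"
        and ev: "map (eval N (cv N w)) ts \<in> irel N r" unfolding Ext_def using MTsD by auto
      have u: "\<And>t. t \<in> set ts \<Longrightarrow> eval N (cv N w) t \<in> univ N"
        using eval_univ[OF NM] wfs fvs wN by blast
      define bs where "bs = map (\<lambda>t. rep (eval N (cv N w) t)) ts"
      have bsN: "set bs \<subseteq> idom N" using rep_univ(1)[OF NM u] unfolding bs_def by auto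
      have bsc: "map (cls N) bs = map (eval N (cv N w)) ts"
        using rep_univ(2)[OF NM u] unfolding bs_def by auto
      have "bs \<in> Bs" using bsN MSig_D(1)[OF NM] len unfolding Bs_def bs_def by auto
      moreover have "N \<in> U bs" using NT wN bsN bsc ev unfolding U_def TEs_def relset_def by auto
      ultimately show "N \<in> \<Union> (U ` Bs)" by blast
    qed
  next
    show "\<Union> (U ` Bs) \<subseteq> Ext V w (GRel r ts)" unfolding U_def TEs_def relset_def Ext_def by auto
  qed
  show ?case
  proof
    show "openin XM (Ext V w (GRel r ts))" unfolding eq using UF(2)[OF oU] .
  next
    show "w ` V \<subseteq> D \<longrightarrow> (Ext V w (GRel r ts) \<in> F \<longleftrightarrow> sat M0 (v0 w) (GRel r ts))"
    proof
      assume wD: "w ` V \<subseteq> D"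
      have "Ext V w (GRel r ts) \<in> F \<longleftrightarrow> (\<exists>bs\<in>Bs. U bs \<in> F)" unfolding eq using UF(1)[OF oU] .
      also have "\<dots> \<longleftrightarrow> (\<exists>bs\<in>Bs. (set bs \<subseteq> D \<and> map (eval M0 (v0 w)) ts = map c0 bs) \<and> (set bs \<subseteq> D \<and> map c0 bs \<in> R r))"
      proof -
        have "U bs \<in> F \<longleftrightarrow> (set bs \<subseteq> D \<and> map (eval M0 (v0 w)) ts = map c0 bs) \<and> (set bs \<subseteq> D \<and> map c0 bs \<in> R r)"
          if bs: "bs \<in> Bs" for bs
        proof -
          have l: "length bs = length ts" "set bs \<subseteq> S" "length bs = arR r" using bs len unfolding Bs_def by auto
          have "U bs \<in> F \<longleftrightarrow> TEs V w ts bs \<in> F \<and> relset r bs \<in> F"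
            unfolding U_def using Fint_iff TEs[OF l(1,2)] o_relset[OF l(3,2)] by blast
          then show ?thesis using TEs[OF l(1,2)] wD rel_gen[OF l(3,2)] by blast
        qed
        then show ?thesis by blast
      qed
      also have "\<dots> \<longleftrightarrow> map (eval M0 (v0 w)) ts \<in> R r"
      proof
        assume H: "map (eval M0 (v0 w)) ts \<in> R r"
        have "set (map (eval M0 (v0 w)) ts) \<subseteq> D // E"
        proof
          fix X assume "X \<in> set (map (eval M0 (v0 w)) ts)"
          then obtain t where t: "t \<in> set ts" "X = eval M0 (v0 w) t" by auto
          show "X \<in> D // E" unfolding t(2) by (rule eval0[OF wfs[OF t(1)] fvs[OF t(1)] wD])
        qed
        then obtain bs where bs: "length bs = length ts" "set bs \<subseteq> D" "map (eval M0 (v0 w)) ts = map c0 bs"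
          using mapreps by blast
        have "bs \<in> Bs" using bs len D_S unfolding Bs_def by auto
        then show "\<exists>bs\<in>Bs. (set bs \<subseteq> D \<and> map (eval M0 (v0 w)) ts = map c0 bs) \<and> (set bs \<subseteq> D \<and> map c0 bs \<in> R r)"
          using bs H by (intro bexI[of _ bs]) (auto simp: bs(3)[symmetric])
      qed auto
      finally show "Ext V w (GRel r ts) \<in> F \<longleftrightarrow> sat M0 (v0 w) (GRel r ts)" by simp
    qed
  qed
next
  case (GConj p q)
  have eq: "Ext V w (GConj p q) = Ext V w p \<inter> Ext V w q" unfolding Ext_def by auto
  have P: "PF V w p" "PF V w q" using GConj by auto
  show ?case unfolding eq using P Fint_iff by (auto simp: openin_Int)
next
  case (GDisj I Fs)
  have P: "PF V w (Fs i)" if i: "i \<in> I" for i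
    by (rule GDisj.IH[OF rangeI]) (use GDisj.prems i in auto)
  have eq: "Ext V w (GDisj I Fs) = \<Union> ((\<lambda>i. Ext V w (Fs i)) ` I)" unfolding Ext_def by auto
  have o: "\<And>i. i \<in> I \<Longrightarrow> openin XM (Ext V w (Fs i))" using P by blast
  show ?case
  proof
    show "openin XM (Ext V w (GDisj I Fs))" unfolding eq using UF(2)[OF o] .
  next
    show "w ` V \<subseteq> D \<longrightarrow> (Ext V w (GDisj I Fs) \<in> F \<longleftrightarrow> sat M0 (v0 w) (GDisj I Fs))"
    proof
      assume wD: "w ` V \<subseteq> D"
      have "Ext V w (GDisj I Fs) \<in> F \<longleftrightarrow> (\<exists>i\<in>I. Ext V w (Fs i) \<in> F)" unfolding eq using UF(1)[OF o] .
      also have "\<dots> \<longleftrightarrow> (\<exists>i\<in>I. sat M0 (v0 w) (Fs i))" using P wD by blast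
      finally show "Ext V w (GDisj I Fs) \<in> F \<longleftrightarrow> sat M0 (v0 w) (GDisj I Fs)" by simp
    qed
  qed
next
  case (GEx x p)
  define U where "U b = Ext (insert x V) (w(x := b)) p" for b
  have P: "PF (insert x V) (w(x := b)) p" if b: "b \<in> S" for b
  proof (rule GEx.IH)
    show "wf_fm arR arF p" using GEx.prems by simp
    show "fv_fm p \<subseteq> insert x V" using GEx.prems by auto
    show "finite (insert x V)" using GEx.prems by simp
    show "(w(x := b)) ` insert x V \<subseteq> S" using GEx.prems b by auto
  qed
  have oU: "\<And>b. b \<in> S \<Longrightarrow> openin XM (U b)" using P unfolding U_def by blast
  have cvu: "cv N (w(x := b)) = (cv N w)(x := cls N b)" for N b unfolding cv_def by (rule ext) simp
  have v0u: "v0 (w(x := b)) = (v0 w)(x := c0 b)" for b unfolding v0_def by (rule ext) simp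
  have eq: "Ext V w (GEx x p) = W V w \<inter> \<Union> (U ` S)"
  proof
    show "Ext V w (GEx x p) \<subseteq> W V w \<inter> \<Union> (U ` S)"
    proof
      fix N assume N: "N \<in> Ext V w (GEx x p)"
      then have NM: "N \<in> MSg" and NT: "N \<in> MTs" and wN: "w ` V \<subseteq> idom N"
        and ev: "\<exists>e\<in>univ N. sat N ((cv N w)(x := e)) p" unfolding Ext_def using MTsD by auto
      then obtain e where e: "e \<in> univ N" "sat N ((cv N w)(x := e)) p" by blast
      define b where "b = rep e"
      have b: "b \<in> idom N" "cls N b = e" using rep_univ[OF NM e(1)] unfolding b_def by auto
      have "b \<in> S" using b MSig_D(1)[OF NM] by blast
      moreover have "N \<in> U b" using NT wN b e(2) unfolding U_def Ext_def cvu by auto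
      ultimately show "N \<in> W V w \<inter> \<Union> (U ` S)" using NT wN unfolding W_def by blast
    qed
  next
    show "W V w \<inter> \<Union> (U ` S) \<subseteq> Ext V w (GEx x p)"
    proof
      fix N assume N: "N \<in> W V w \<inter> \<Union> (U ` S)"
      then obtain b where b: "b \<in> S" "N \<in> U b" by blast
      have NM: "N \<in> MSg" and NT: "N \<in> MTs" and wN: "w ` V \<subseteq> idom N" using N MTsD unfolding W_def by auto
      have bN: "b \<in> idom N" and s: "sat N (cv N (w(x := b))) p" using b(2) unfolding U_def Ext_def by auto
      have "cls N b \<in> univ N" using cls_univ[OF NM bN] .
      then show "N \<in> Ext V w (GEx x p)" using s NT wN unfolding cvu Ext_def by auto
    qed
  qed
  have oW: "openin XM (W V w)" using W_open GEx.prems by blast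
  show ?case
  proof
    have "openin XM (\<Union> (U ` S))" by (rule UF(2)) (rule oU)
    then show "openin XM (Ext V w (GEx x p))" unfolding eq using oW by (simp add: openin_Int)
  next
    show "w ` V \<subseteq> D \<longrightarrow> (Ext V w (GEx x p) \<in> F \<longleftrightarrow> sat M0 (v0 w) (GEx x p))"
    proof
      assume wD: "w ` V \<subseteq> D"
      have WF: "W V w \<in> F" using W_F GEx.prems wD by blast
      have "Ext V w (GEx x p) \<in> F \<longleftrightarrow> \<Union> (U ` S) \<in> F"
      proof -
        have "openin XM (\<Union> (U ` S))" by (rule UF(2)) (rule oU)
        then show ?thesis unfolding eq using Fint_iff[OF oW] WF by blast
      qed
      also have "\<dots> \<longleftrightarrow> (\<exists>b\<in>S. U b \<in> F)" using UF(1)[OF oU] .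
      also have "\<dots> \<longleftrightarrow> (\<exists>b\<in>D. sat M0 (v0 (w(x := b))) p)"
      proof
        assume "\<exists>b\<in>S. U b \<in> F"
        then obtain b where b: "b \<in> S" "U b \<in> F" by blast
        have "U b \<subseteq> domset b" unfolding U_def Ext_def domset_def by auto
        then have bD: "b \<in> D" using sub_D b(2) by blast
        have "(w(x := b)) ` insert x V \<subseteq> D" using wD bD by auto
        then show "\<exists>b\<in>D. sat M0 (v0 (w(x := b))) p" using P[OF b(1)] b(2) bD unfolding U_def by blast
      next
        assume "\<exists>b\<in>D. sat M0 (v0 (w(x := b))) p"
        then obtain b where b: "b \<in> D" "sat M0 (v0 (w(x := b))) p" by blast
        have "(w(x := b)) ` insert x V \<subseteq> D" using wD b by auto
        then show "\<exists>b\<in>S. U b \<in> F" using P[of b] b D_S unfolding U_def by blast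
      qed
      also have "\<dots> \<longleftrightarrow> sat M0 (v0 w) (GEx x p)"
      proof
        assume "\<exists>b\<in>D. sat M0 (v0 (w(x := b))) p"
        then obtain b where b: "b \<in> D" "sat M0 (v0 (w(x := b))) p" by blast
        have "c0 b \<in> univ M0" using c0_quot[OF b(1)] univ_M0 by simp
        then show "sat M0 (v0 w) (GEx x p)" using b(2) unfolding v0u sat.simps by blast
      next
        assume "sat M0 (v0 w) (GEx x p)"
        then obtain e where e: "e \<in> D // E" "sat M0 ((v0 w)(x := e)) p" using univ_M0 by auto
        then have "rep e \<in> D" "c0 (rep e) = e" using quot_rep by auto
        then show "\<exists>b\<in>D. sat M0 (v0 (w(x := b))) p" using e(2) unfolding v0u by metis
      qed
      finally show "Ext V w (GEx x p) \<in> F \<longleftrightarrow> sat M0 (v0 w) (GEx x p)" .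
    qed
  qed
qed

end


definition BM :: "'s set \<Rightarrow> ('r \<Rightarrow> nat) \<Rightarrow> ('f \<Rightarrow> nat) \<Rightarrow> ('s, 'r, 'f) istr set set" where
  "BM S arR arF =
     ({MSig S arR arF}
      \<union> {{M \<in> MSig S arR arF. a \<in> idom M} | a. a \<in> S}
      \<union> {{M \<in> MSig S arR arF. a \<in> idom M \<and> b \<in> idom M \<and> (a, b) \<in> ieq M} | a b. a \<in> S \<and> b \<in> S}
      \<union> {{M \<in> MSig S arR arF. set as \<subseteq> idom M \<and> map (cls M) as \<in> irel M r} | r as.
            length as = arR r \<and> set as \<subseteq> S}
      \<union> {{M \<in> MSig S arR arF. set as \<subseteq> idom M \<and> b \<in> idom M \<and> ifun M f (map (cls M) as) = cls M b}
            | f as b. length as = arF f \<and> set as \<subseteq> S \<and> b \<in> S})"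

lemma MSig_top_BM: "MSig_top S arR arF = topology_generated_by (BM S arR arF)"
  unfolding MSig_top_def BM_def ..

lemma BM_cases:
  assumes "G \<in> BM S arR arF"
  obtains "G = MSig S arR arF"
  | a where "a \<in> S" "G = {M \<in> MSig S arR arF. a \<in> idom M}"
  | a b where "a \<in> S" "b \<in> S" "G = {M \<in> MSig S arR arF. a \<in> idom M \<and> b \<in> idom M \<and> (a, b) \<in> ieq M}"
  | r as where "length as = arR r" "set as \<subseteq> S" "G = {M \<in> MSig S arR arF. set as \<subseteq> idom M \<and> map (cls M) as \<in> irel M r}"
  | f as b where "length as = arF f" "set as \<subseteq> S" "b \<in> S"
      "G = {M \<in> MSig S arR arF. set as \<subseteq> idom M \<and> b \<in> idom M \<and> ifun M f (map (cls M) as) = cls M b}"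
  using assms unfolding BM_def by blast

lemma BM_dom: "a \<in> S \<Longrightarrow> {M \<in> MSig S arR arF. a \<in> idom M} \<in> BM S arR arF"
  unfolding BM_def by blast
lemma BM_eq: "a \<in> S \<Longrightarrow> b \<in> S \<Longrightarrow> {M \<in> MSig S arR arF. a \<in> idom M \<and> b \<in> idom M \<and> (a, b) \<in> ieq M} \<in> BM S arR arF"
  unfolding BM_def by blast
lemma BM_rel: "length as = arR r \<Longrightarrow> set as \<subseteq> S \<Longrightarrow>
  {M \<in> MSig S arR arF. set as \<subseteq> idom M \<and> map (cls M) as \<in> irel M r} \<in> BM S arR arF"
  unfolding BM_def by blast
lemma BM_fun: "length as = arF f \<Longrightarrow> set as \<subseteq> S \<Longrightarrow> b \<in> S \<Longrightarrow>
  {M \<in> MSig S arR arF. set as \<subseteq> idom M \<and> b \<in> idom M \<and> ifun M f (map (cls M) as) = cls M b} \<in> BM S arR arF"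
  unfolding BM_def by blast
lemma BM_top: "MSig S arR arF \<in> BM S arR arF"
  unfolding BM_def by blast

lemma T0_half:
  assumes N: "N \<in> MSig S arR arF" and N': "N' \<in> MSig S arR arF"
    and ag: "\<forall>G\<in>BM S arR arF. N \<in> G \<longleftrightarrow> N' \<in> G"
  shows "idom N \<subseteq> idom N'" "ieq N \<subseteq> ieq N'"
proof -
  show "idom N \<subseteq> idom N'"
  proof
    fix a assume a: "a \<in> idom N"
    then have aS: "a \<in> S" using MSig_D(1)[OF N] by blast
    have "N \<in> {M \<in> MSig S arR arF. a \<in> idom M}" using a N by blast
    moreover have "N \<in> {M \<in> MSig S arR arF. a \<in> idom M} \<longleftrightarrow> N' \<in> {M \<in> MSig S arR arF. a \<in> idom M}"
      using bspec[OF ag BM_dom[OF aS]] .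
    ultimately show "a \<in> idom N'" by simp
  qed
  show "ieq N \<subseteq> ieq N'"
  proof
    fix p assume p: "p \<in> ieq N"
    obtain a b where ab: "p = (a, b)" by (cases p)
    have d: "a \<in> idom N" "b \<in> idom N" using ieq_dom[OF N] p ab by auto
    then have S: "a \<in> S" "b \<in> S" using MSig_D(1)[OF N] by blast+
    have "N \<in> {M \<in> MSig S arR arF. a \<in> idom M \<and> b \<in> idom M \<and> (a, b) \<in> ieq M}" using d p ab N by blast
    moreover note bspec[OF ag BM_eq[OF S]]
    ultimately show "p \<in> ieq N'" using ab by simp
  qed
qed

lemma T0_MSig:
  assumes N: "N \<in> MSig S arR arF" and N': "N' \<in> MSig S arR arF"
    and ag: "\<forall>G\<in>BM S arR arF. N \<in> G \<longleftrightarrow> N' \<in> G"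
  shows "N = N'"
proof -
  have ag': "\<forall>G\<in>BM S arR arF. N' \<in> G \<longleftrightarrow> N \<in> G" using ag by blast
  have dom: "idom N = idom N'" using T0_half[OF N N' ag] T0_half[OF N' N ag'] by blast
  have eq: "ieq N = ieq N'" using T0_half[OF N N' ag] T0_half[OF N' N ag'] by blast
  have cl: "cls N = cls N'" unfolding cls_def using eq by simp
  have un: "univ N = univ N'" unfolding univ_def using eq dom by simp
  have rel: "irel N r \<subseteq> irel N' r" if N: "N \<in> MSig S arR arF" and N': "N' \<in> MSig S arR arF"
    and ag: "\<forall>G\<in>BM S arR arF. N \<in> G \<longleftrightarrow> N' \<in> G" and cl: "cls N = cls N'" for N N' r
  proof
    fix xs assume xs: "xs \<in> irel N r"
    then have l: "length xs = arR r" and u: "set xs \<subseteq> univ N" using MSig_D(3)[OF N] by auto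
    define as where "as = map rep xs"
    have asN: "set as \<subseteq> idom N" using rep_univ(1)[OF N] u unfolding as_def by auto
    have asc: "map (cls N) as = xs" unfolding as_def map_map by (rule map_idI) (use rep_univ(2)[OF N] u in auto)
    have la: "length as = arR r" using l unfolding as_def by simp
    have aS: "set as \<subseteq> S" using asN MSig_D(1)[OF N] by blast
    have "N \<in> {M \<in> MSig S arR arF. set as \<subseteq> idom M \<and> map (cls M) as \<in> irel M r}" using N asN asc xs by simp
    moreover note bspec[OF ag BM_rel[where as=as and r=r and arR=arR and S=S and arF=arF, OF la aS]]
    ultimately show "xs \<in> irel N' r" using asc cl by simp
  qed
  have relq: "irel N = irel N'"
    using rel[OF N N' ag cl] rel[OF N' N ag' cl[symmetric]] by (intro ext) blast
  have fn: "ifun N f xs = ifun N' f xs" for f xs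
  proof (cases "length xs = arF f \<and> set xs \<subseteq> univ N")
    case True
    then have u: "ifun N f xs \<in> univ N" using MSig_D(4)[OF N] by blast
    define b where "b = rep (ifun N f xs)"
    have b: "b \<in> idom N" "cls N b = ifun N f xs" using rep_univ[OF N u] unfolding b_def by auto
    define as where "as = map rep xs"
    have asN: "set as \<subseteq> idom N" using rep_univ(1)[OF N] True unfolding as_def by auto
    have asc: "map (cls N) as = xs" unfolding as_def map_map by (rule map_idI) (use rep_univ(2)[OF N] True in auto)
    have la: "length as = arF f" using True unfolding as_def by simp
    have aS: "set as \<subseteq> S" "b \<in> S" using asN b MSig_D(1)[OF N] by blast+
    have "N \<in> {M \<in> MSig S arR arF. set as \<subseteq> idom M \<and> b \<in> idom M \<and> ifun M f (map (cls M) as) = cls M b}"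
      using N asN asc b by simp
    moreover note bspec[OF ag BM_fun[where as=as and f=f and arR=arR and S=S and arF=arF and b=b, OF la aS]]
    ultimately show ?thesis using asc cl b by simp
  next
    case False
    then show ?thesis using MSig_D(5)[OF N] MSig_D(5)[OF N'] un by metis
  qed
  then have fnq: "ifun N = ifun N'" by (intro ext)
  show ?thesis using dom eq relq fnq by (cases N, cases N') simp
qed

context MF begin

lemma M0_model:
  assumes geo: "geometric_theory arR arF T"
  shows "is_model M0 T"
  unfolding is_model_def
proof (intro ballI allI impI, clarify)
  fix xs p q v
  assume tr: "(xs, p, q) \<in> T" and vu: "\<forall>x\<in>set xs. v x \<in> univ M0" and sp: "sat M0 v p"
  have wf: "wf_fm arR arF p" "wf_fm arR arF q" and fvs: "fv_fm p \<subseteq> set xs" "fv_fm q \<subseteq> set xs"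
    using geo tr unfolding geometric_theory_def by fastforce+
  define V where "V = set xs"
  define w where "w x = rep (v x)" for x
  have wD: "w ` V \<subseteq> D" and ag: "\<And>x. x \<in> V \<Longrightarrow> v0 w x = v x"
    using quot_rep vu univ_M0 unfolding w_def V_def by (auto simp: v0_apply)
  have wS: "w ` V \<subseteq> S" using wD D_S by blast
  have fin: "finite V" unfolding V_def by simp
  have Pp: "PF V w p" and Pq: "PF V w q" using Ext_lemma[OF wf(1) _ fin wS] Ext_lemma[OF wf(2) _ fin wS] fvs
    unfolding V_def by blast+
  have sp': "sat M0 (v0 w) p" using sp sat_cong[of p "v0 w" v M0] ag fvs unfolding V_def by blast
  have Ep: "Ext V w p \<in> F" using Pp wD sp' by blast
  have "Ext V w p \<subseteq> Ext V w q"
  proof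
    fix N assume N: "N \<in> Ext V w p"
    then have NT: "N \<in> MTs" and NM: "N \<in> MSg" and wN: "w ` V \<subseteq> idom N" and s: "sat N (cv N w) p"
      unfolding Ext_def using MTsD by auto
    have mod: "is_model N T" using NT unfolding MT_def by blast
    have "\<forall>x\<in>set xs. cv N w x \<in> univ N" using cls_univ[OF NM] wN unfolding V_def by (auto simp: cv_apply)
    then have "sat N (cv N w) q" using mod tr s unfolding is_model_def by fastforce
    then show "N \<in> Ext V w q" using NT wN unfolding Ext_def by blast
  qed
  then have "Ext V w q \<in> F" using Fup[OF Ep] Pq by blast
  then have "sat M0 (v0 w) q" using Pq wD by blast
  then show "sat M0 v q" using sat_cong[of q "v0 w" v M0] ag fvs unfolding V_def by blast
qed

lemma M0_MT: "geometric_theory arR arF T \<Longrightarrow> M0 \<in> MTs"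
  using M0_model M0_MSig unfolding MT_def by blast

lemma gen_char:
  assumes G: "G \<in> BM S arR arF"
  shows "G \<inter> MTs \<in> F \<longleftrightarrow> M0 \<in> G"
proof -
  have C: "{M \<in> MSg. P M} \<inter> MTs = {M \<in> MTs. P M}" for P using MT_sub by blast
  from G show ?thesis
  proof (cases rule: BM_cases)
    case 1
    have "MSg \<inter> MTs = MTs" using MT_sub by blast
    then show ?thesis using 1 MT_F M0_MSig by simp
  next
    case (2 a)
    have "G \<inter> MTs = domset a" using 2 C unfolding domset_def by simp
    then show ?thesis using 2 M0_MSig by (auto simp: D_def)
  next
    case (3 a b)
    have "G \<inter> MTs = eqset a b" using 3 C unfolding eqset_def by simp
    moreover have "(a, b) \<in> E \<longleftrightarrow> eqset a b \<in> F" using 3 unfolding E_def by auto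
    ultimately show ?thesis using 3 M0_MSig E_D by auto
  next
    case (4 r as)
    have "G \<inter> MTs = relset r as" using 4 C unfolding relset_def by simp
    then show ?thesis using 4 M0_MSig rel_gen[OF 4(1,2)] by (simp add: cls_M0)
  next
    case (5 f as b)
    have "G \<inter> MTs = fg f as b" using 5 C unfolding fg_def by simp
    then show ?thesis using 5 M0_MSig fg_gen[OF 5(1,2,3)] by (simp add: cls_M0)
  qed
qed

end

theorem sober_MT:
  assumes geo: "geometric_theory arR arF T"
  shows "sober (subtopology (MSig_top S arR arF) (MT S arR arF T))"
  unfolding MSig_top_BM
proof (rule sober_generated)
  show "MT S arR arF T \<subseteq> \<Union> (BM S arR arF)" using MT_sub BM_top by blast
next
  fix x y assume x: "x \<in> MT S arR arF T" and y: "y \<in> MT S arR arF T"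
    and ag: "\<forall>G\<in>BM S arR arF. x \<in> G \<longleftrightarrow> y \<in> G"
  show "x = y" by (rule T0_MSig[OF subsetD[OF MT_sub x] subsetD[OF MT_sub y] ag])
next
  fix F assume cF: "completely_prime_filter (subtopology (topology_generated_by (BM S arR arF)) (MT S arR arF T)) F"
  have cF': "completely_prime_filter (subtopology (MSig_top S arR arF) (MT S arR arF T)) F"
    using cF unfolding MSig_top_BM .
  interpret MF S arR arF T F by (rule MF.intro[OF cF'])
  show "\<exists>x\<in>MT S arR arF T. \<forall>G\<in>BM S arR arF. G \<inter> MT S arR arF T \<in> F \<longleftrightarrow> x \<in> G"
  proof (rule bexI[of _ M0])
    show "M0 \<in> MT S arR arF T" by (rule M0_MT[OF geo])
    show "\<forall>G\<in>BM S arR arF. G \<inter> MT S arR arF T \<in> F \<longleftrightarrow> M0 \<in> G" using gen_char by blast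
  qed
qed



definition BI :: "'s set \<Rightarrow> ('r \<Rightarrow> nat) \<Rightarrow> ('f \<Rightarrow> nat) \<Rightarrow> ('s, 'r, 'f) iiso set set" where
  "BI S arR arF =
     ({ISig S arR arF}
      \<union> {{g \<in> ISig S arR arF. isrc g \<in> U} | U. openin (MSig_top S arR arF) U}
      \<union> {{g \<in> ISig S arR arF. itgt g \<in> U} | U. openin (MSig_top S arR arF) U}
      \<union> {{g \<in> ISig S arR arF. a \<in> idom (isrc g) \<and> b \<in> idom (itgt g) \<and>
              imap g (cls (isrc g) a) = cls (itgt g) b} | a b. a \<in> S \<and> b \<in> S})"

lemma ISig_top_BI: "ISig_top S arR arF = topology_generated_by (BI S arR arF)"
  unfolding ISig_top_def BI_def ..

lemma BI_cases:
  assumes "G \<in> BI S arR arF"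
  obtains "G = ISig S arR arF"
  | U where "openin (MSig_top S arR arF) U" "G = {g \<in> ISig S arR arF. isrc g \<in> U}"
  | U where "openin (MSig_top S arR arF) U" "G = {g \<in> ISig S arR arF. itgt g \<in> U}"
  | a b where "a \<in> S" "b \<in> S" "G = {g \<in> ISig S arR arF. a \<in> idom (isrc g) \<and> b \<in> idom (itgt g) \<and>
              imap g (cls (isrc g) a) = cls (itgt g) b}"
  using assms unfolding BI_def by blast

lemma BI_top: "ISig S arR arF \<in> BI S arR arF" unfolding BI_def by blast
lemma BI_src: "openin (MSig_top S arR arF) U \<Longrightarrow> {g \<in> ISig S arR arF. isrc g \<in> U} \<in> BI S arR arF"
  unfolding BI_def by blast
lemma BI_tgt: "openin (MSig_top S arR arF) U \<Longrightarrow> {g \<in> ISig S arR arF. itgt g \<in> U} \<in> BI S arR arF"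
  unfolding BI_def by blast
lemma BI_ig: "a \<in> S \<Longrightarrow> b \<in> S \<Longrightarrow> {g \<in> ISig S arR arF. a \<in> idom (isrc g) \<and> b \<in> idom (itgt g) \<and>
              imap g (cls (isrc g) a) = cls (itgt g) b} \<in> BI S arR arF"
  unfolding BI_def by blast

lemma IT_sub: "IT S arR arF T \<subseteq> ISig S arR arF"
  unfolding IT_def ISig_on_def using MT_sub by blast

lemma IT_D:
  assumes "g \<in> IT S arR arF T"
  shows "isrc g \<in> MT S arR arF T" "itgt g \<in> MT S arR arF T" "is_iso arR arF (isrc g) (itgt g) (imap g)"
  using assms unfolding IT_def ISig_on_def by auto

lemma iso_D:
  assumes "is_iso arR arF M N h"
  shows "bij_betw h (univ M) (univ N)" "\<And>x. x \<notin> univ M \<Longrightarrow> h x = {}"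
    "\<And>r xs. length xs = arR r \<Longrightarrow> set xs \<subseteq> univ M \<Longrightarrow> xs \<in> irel M r \<longleftrightarrow> map h xs \<in> irel N r"
    "\<And>f xs. length xs = arF f \<Longrightarrow> set xs \<subseteq> univ M \<Longrightarrow> h (ifun M f xs) = ifun N f (map h xs)"
  using assms unfolding is_iso_def by auto

lemma topspace_XI: "topspace (subtopology (ISig_top S arR arF) (IT S arR arF T)) = IT S arR arF T"
proof -
  have "topspace (ISig_top S arR arF) = ISig S arR arF"
    unfolding ISig_top_BI topology_generated_by_topspace using BI_top unfolding BI_def by blast
  then show ?thesis using IT_sub by (metis inf.absorb_iff2 topspace_subtopology)
qed

lemma openI_gen: "G \<in> BI S arR arF \<Longrightarrow> openin (subtopology (ISig_top S arR arF) (IT S arR arF T)) (G \<inter> IT S arR arF T)"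
  unfolding ISig_top_BI by (intro openin_subtopology_Int topology_generated_by_Basis)

lemma open_srcI:
  assumes "openin (MSig_top S arR arF) U"
  shows "openin (subtopology (ISig_top S arR arF) (IT S arR arF T)) {g \<in> IT S arR arF T. isrc g \<in> U}"
proof -
  have "{g \<in> IT S arR arF T. isrc g \<in> U} = {g \<in> ISig S arR arF. isrc g \<in> U} \<inter> IT S arR arF T"
    using IT_sub by blast
  then show ?thesis using openI_gen[OF BI_src[OF assms]] by simp
qed

lemma open_tgtI:
  assumes "openin (MSig_top S arR arF) U"
  shows "openin (subtopology (ISig_top S arR arF) (IT S arR arF T)) {g \<in> IT S arR arF T. itgt g \<in> U}"
proof -
  have "{g \<in> IT S arR arF T. itgt g \<in> U} = {g \<in> ISig S arR arF. itgt g \<in> U} \<inter> IT S arR arF T"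
    using IT_sub by blast
  then show ?thesis using openI_gen[OF BI_tgt[OF assms]] by simp
qed

lemma push_cpf:
  fixes sel :: "('s, 'r, 'f) iiso \<Rightarrow> ('s, 'r, 'f) istr"
  assumes cpf: "completely_prime_filter (subtopology (ISig_top S arR arF) (IT S arR arF T)) F"
    and selMT: "\<And>g. g \<in> IT S arR arF T \<Longrightarrow> sel g \<in> MT S arR arF T"
    and selO: "\<And>U. openin (MSig_top S arR arF) U \<Longrightarrow>
         openin (subtopology (ISig_top S arR arF) (IT S arR arF T)) {g \<in> IT S arR arF T. sel g \<in> U}"
  shows "completely_prime_filter (subtopology (MSig_top S arR arF) (MT S arR arF T))
     {U. openin (subtopology (MSig_top S arR arF) (MT S arR arF T)) U \<and> {g \<in> IT S arR arF T. sel g \<in> U} \<in> F}"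
    (is "completely_prime_filter ?XM ?G")
proof -
  let ?XI = "subtopology (ISig_top S arR arF) (IT S arR arF T)"
  let ?P = "\<lambda>U. {g \<in> IT S arR arF T. sel g \<in> U}"
  have oP: "openin ?XI (?P U)" if "openin ?XM U" for U
  proof -
    have "\<exists>U'. openin (MSig_top S arR arF) U' \<and> U = U' \<inter> MT S arR arF T"
      using that by (simp only: openin_subtopology)
    then obtain U' where U': "openin (MSig_top S arR arF) U'" "U = U' \<inter> MT S arR arF T" by blast
    have "?P U = ?P U'" using U'(2) selMT by auto
    then show ?thesis using selO[OF U'(1)] by simp
  qed
  have top: "topspace ?XM \<in> ?G"
  proof -
    have "?P (MT S arR arF T) = IT S arR arF T" using selMT by blast
    moreover have "openin ?XM (topspace ?XM)" by (rule openin_topspace)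
    ultimately show ?thesis using cpf_top[OF cpf] topspace_XI[of S arR arF T] topspace_XM[of S arR arF T]
      by simp
  qed
  have int: "U \<inter> V \<in> ?G" if "U \<in> ?G" "V \<in> ?G" for U V
  proof -
    have "?P (U \<inter> V) = ?P U \<inter> ?P V" by blast
    then show ?thesis using that cpf_int[OF cpf] by (simp add: openin_Int)
  qed
  have up: "V \<in> ?G" if "U \<in> ?G" "openin ?XM V" "U \<subseteq> V" for U V
  proof -
    have "?P U \<subseteq> ?P V" using that(3) by blast
    then show ?thesis using that cpf_up[OF cpf _ oP[OF that(2)]] by blast
  qed
  have cp: "\<exists>U\<in>SS. U \<in> ?G" if "\<forall>U\<in>SS. openin ?XM U" "\<Union>SS \<in> ?G" for SS
  proof -
    have eq: "?P (\<Union>SS) = \<Union> (?P ` SS)" by blast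
    have "\<Union> (?P ` SS) \<in> F" using that(2) eq by simp
    moreover have "\<And>V. V \<in> ?P ` SS \<Longrightarrow> openin ?XI V" using that(1) oP by blast
    ultimately have "\<exists>V\<in>?P ` SS. V \<in> F" using cpf_cp[OF cpf] by blast
    then obtain U where "U \<in> SS" "?P U \<in> F" by blast
    then show ?thesis using that(1) by blast
  qed
  show ?thesis unfolding completely_prime_filter_def
    using top int up cp by blast
qed

lemma push_point:
  fixes sel :: "('s, 'r, 'f) iiso \<Rightarrow> ('s, 'r, 'f) istr"
  assumes geo: "geometric_theory arR arF T"
    and cpf: "completely_prime_filter (subtopology (ISig_top S arR arF) (IT S arR arF T)) F"
    and selMT: "\<And>g. g \<in> IT S arR arF T \<Longrightarrow> sel g \<in> MT S arR arF T"
    and selO: "\<And>U. openin (MSig_top S arR arF) U \<Longrightarrow>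
         openin (subtopology (ISig_top S arR arF) (IT S arR arF T)) {g \<in> IT S arR arF T. sel g \<in> U}"
  shows "\<exists>M\<in>MT S arR arF T. \<forall>U. openin (subtopology (MSig_top S arR arF) (MT S arR arF T)) U \<longrightarrow>
     ({g \<in> IT S arR arF T. sel g \<in> U} \<in> F \<longleftrightarrow> M \<in> U)"
proof -
  let ?XM = "subtopology (MSig_top S arR arF) (MT S arR arF T)"
  let ?G = "{U. openin ?XM U \<and> {g \<in> IT S arR arF T. sel g \<in> U} \<in> F}"
  have cG: "completely_prime_filter ?XM ?G" by (rule push_cpf[OF cpf selMT selO])
  have sob: "sober ?XM" by (rule sober_MT[OF geo])
  have "\<exists>!M. M \<in> topspace ?XM \<and> ?G = {U. openin ?XM U \<and> M \<in> U}"
    using sob[unfolded sober_def, rule_format, OF cG] .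
  then have "\<exists>M. M \<in> topspace ?XM \<and> ?G = {U. openin ?XM U \<and> M \<in> U}" by (rule ex1_implies_ex)
  then obtain M where M: "M \<in> topspace ?XM" "?G = {U. openin ?XM U \<and> M \<in> U}" by blast
  have "\<forall>U. openin ?XM U \<longrightarrow> ({g \<in> IT S arR arF T. sel g \<in> U} \<in> F \<longleftrightarrow> M \<in> U)"
  proof (intro allI impI)
    fix U assume U: "openin ?XM U"
    have "U \<in> ?G \<longleftrightarrow> U \<in> {U. openin ?XM U \<and> M \<in> U}" using M(2) by simp
    then show "{g \<in> IT S arR arF T. sel g \<in> U} \<in> F \<longleftrightarrow> M \<in> U" using U by simp
  qed
  moreover have "M \<in> MT S arR arF T" using M(1) topspace_XM[of S arR arF T] by simp
  ultimately show ?thesis by blast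
qed



lemma swapF:
  assumes "completely_prime_filter X F" "I \<in> F" "openin X A" "openin X B" "A \<inter> I = B \<inter> I"
  shows "A \<in> F \<longleftrightarrow> B \<in> F"
proof
  assume "A \<in> F"
  then have "A \<inter> I \<in> F" using cpf_int[OF assms(1) _ assms(2)] by blast
  then have "B \<inter> I \<in> F" using assms(5) by simp
  then show "B \<in> F" using cpf_up[OF assms(1) _ assms(4)] by blast
next
  assume "B \<in> F"
  then have "B \<inter> I \<in> F" using cpf_int[OF assms(1) _ assms(2)] by blast
  then have "A \<inter> I \<in> F" using assms(5) by simp
  then show "A \<in> F" using cpf_up[OF assms(1) _ assms(3)] by blast
qed

locale IF =
  fixes S :: "'s set" and arR :: "'r \<Rightarrow> nat" and arF :: "'f \<Rightarrow> nat"
    and T :: "('r, 'f, 'i) gseq set" and F :: "('s, 'r, 'f) iiso set set"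
    and M :: "('s, 'r, 'f) istr" and N :: "('s, 'r, 'f) istr"
  assumes cpf: "completely_prime_filter (subtopology (ISig_top S arR arF) (IT S arR arF T)) F"
    and MMT: "M \<in> MT S arR arF T" and NMT: "N \<in> MT S arR arF T"
    and src: "\<And>U. openin (subtopology (MSig_top S arR arF) (MT S arR arF T)) U \<Longrightarrow>
        ({g \<in> IT S arR arF T. isrc g \<in> U} \<in> F \<longleftrightarrow> M \<in> U)"
    and tgt: "\<And>U. openin (subtopology (MSig_top S arR arF) (MT S arR arF T)) U \<Longrightarrow>
        ({g \<in> IT S arR arF T. itgt g \<in> U} \<in> F \<longleftrightarrow> N \<in> U)"
begin

abbreviation "XI \<equiv> subtopology (ISig_top S arR arF) (IT S arR arF T)"
abbreviation "ITs \<equiv> IT S arR arF T"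
abbreviation "MTs \<equiv> MT S arR arF T"
abbreviation "MSg \<equiv> MSig S arR arF"

lemma IT_F: "ITs \<in> F" using cpf_top[OF cpf] topspace_XI by metis
lemma Fne: "A \<in> F \<Longrightarrow> A \<noteq> {}" using cpf_empty[OF cpf] by blast
lemma Fint: "A \<in> F \<Longrightarrow> B \<in> F \<Longrightarrow> A \<inter> B \<in> F" by (rule cpf_int[OF cpf])
lemma Fup: "A \<in> F \<Longrightarrow> A \<subseteq> B \<Longrightarrow> openin XI B \<Longrightarrow> B \<in> F" using cpf_up[OF cpf] by blast
lemma Fcp: "(\<And>U. U \<in> SS \<Longrightarrow> openin XI U) \<Longrightarrow> \<Union>SS \<in> F \<Longrightarrow> \<exists>U\<in>SS. U \<in> F"
  by (rule cpf_cp[OF cpf])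

lemma MM: "M \<in> MSg" and NM: "N \<in> MSg" using MMT NMT MT_sub by blast+

lemma gK: "g \<in> ITs \<Longrightarrow> isrc g \<in> MSg" and gL: "g \<in> ITs \<Longrightarrow> itgt g \<in> MSg"
  and giso: "g \<in> ITs \<Longrightarrow> is_iso arR arF (isrc g) (itgt g) (imap g)"
  using IT_D MT_sub by blast+

lemma srcP:
  assumes "openin (MSig_top S arR arF) {K \<in> MSg. P K}"
  shows "{g \<in> ITs. P (isrc g)} \<in> F \<longleftrightarrow> P M"
proof -
  have "{g \<in> ITs. isrc g \<in> {K \<in> MTs. P K}} = {g \<in> ITs. P (isrc g)}" using IT_D by blast
  then show ?thesis using src[OF open_sub[OF assms]] MMT by simp
qed

lemma tgtP:
  assumes "openin (MSig_top S arR arF) {K \<in> MSg. P K}"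
  shows "{g \<in> ITs. P (itgt g)} \<in> F \<longleftrightarrow> P N"
proof -
  have "{g \<in> ITs. itgt g \<in> {K \<in> MTs. P K}} = {g \<in> ITs. P (itgt g)}" using IT_D by blast
  then show ?thesis using tgt[OF open_sub[OF assms]] NMT by simp
qed

lemma oSrc:
  assumes "openin (MSig_top S arR arF) {K \<in> MSg. P K}"
  shows "openin XI {g \<in> ITs. P (isrc g)}"
proof -
  have "{g \<in> ITs. isrc g \<in> {K \<in> MSg. P K}} = {g \<in> ITs. P (isrc g)}" using gK by blast
  then show ?thesis using open_srcI[OF assms, of T] by simp
qed

lemma oTgt:
  assumes "openin (MSig_top S arR arF) {K \<in> MSg. P K}"
  shows "openin XI {g \<in> ITs. P (itgt g)}"
proof -
  have "{g \<in> ITs. itgt g \<in> {K \<in> MSg. P K}} = {g \<in> ITs. P (itgt g)}" using gL by blast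
  then show ?thesis using open_tgtI[OF assms, of T] by simp
qed

definition Ig where "Ig a b = {g \<in> ITs. a \<in> idom (isrc g) \<and> b \<in> idom (itgt g) \<and>
   imap g (cls (isrc g) a) = cls (itgt g) b}"

lemma Ig_open: "a \<in> S \<Longrightarrow> b \<in> S \<Longrightarrow> openin XI (Ig a b)"
proof -
  assume ab: "a \<in> S" "b \<in> S"
  have "Ig a b = {g \<in> ISig S arR arF. a \<in> idom (isrc g) \<and> b \<in> idom (itgt g) \<and>
              imap g (cls (isrc g) a) = cls (itgt g) b} \<inter> ITs" unfolding Ig_def using IT_sub by blast
  then show ?thesis using openI_gen[OF BI_ig[OF ab]] by simp
qed

lemma Ig_S: "Ig a b \<in> F \<Longrightarrow> a \<in> S \<and> b \<in> S"
proof -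
  assume "Ig a b \<in> F"
  then obtain g where g: "g \<in> Ig a b" using Fne by blast
  then have "g \<in> ITs" "a \<in> idom (isrc g)" "b \<in> idom (itgt g)" unfolding Ig_def by auto
  then show ?thesis using MSig_D(1)[OF gK] MSig_D(1)[OF gL] by blast
qed

lemma Ig_dom: "Ig a b \<in> F \<Longrightarrow> a \<in> idom M \<and> b \<in> idom N"
proof -
  assume A: "Ig a b \<in> F"
  have S: "a \<in> S" "b \<in> S" using Ig_S[OF A] by auto
  have "Ig a b \<subseteq> {g \<in> ITs. a \<in> idom (isrc g)}" "Ig a b \<subseteq> {g \<in> ITs. b \<in> idom (itgt g)}" unfolding Ig_def by auto
  then have "{g \<in> ITs. a \<in> idom (isrc g)} \<in> F" "{g \<in> ITs. b \<in> idom (itgt g)} \<in> F"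
    using Fup[OF A] oSrc[OF open_dom[OF S(1)]] oTgt[OF open_dom[OF S(2)]] by blast+
  then show ?thesis using srcP[OF open_dom[OF S(1)]] tgtP[OF open_dom[OF S(2)]] by blast
qed

lemma Ig_ex:
  assumes aM: "a \<in> idom M"
  shows "\<exists>b\<in>S. Ig a b \<in> F"
proof -
  have aS: "a \<in> S" using aM MSig_D(1)[OF MM] by blast
  have D: "{g \<in> ITs. a \<in> idom (isrc g)} \<in> F" using srcP[OF open_dom[OF aS]] aM by blast
  have eq: "{g \<in> ITs. a \<in> idom (isrc g)} = \<Union> (Ig a ` S)"
  proof
    show "{g \<in> ITs. a \<in> idom (isrc g)} \<subseteq> \<Union> (Ig a ` S)"
    proof
      fix g assume g: "g \<in> {g \<in> ITs. a \<in> idom (isrc g)}"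
      then have gI: "g \<in> ITs" and ag: "a \<in> idom (isrc g)" by auto
      have "cls (isrc g) a \<in> univ (isrc g)" using cls_univ[OF gK[OF gI] ag] .
      then have u: "imap g (cls (isrc g) a) \<in> univ (itgt g)"
        using iso_D(1)[OF giso[OF gI]] bij_betwE by blast
      define b where "b = rep (imap g (cls (isrc g) a))"
      have b: "b \<in> idom (itgt g)" "cls (itgt g) b = imap g (cls (isrc g) a)"
        using rep_univ[OF gL[OF gI] u] unfolding b_def by auto
      have "b \<in> S" using b MSig_D(1)[OF gL[OF gI]] by blast
      moreover have "g \<in> Ig a b" using gI ag b unfolding Ig_def by auto
      ultimately show "g \<in> \<Union> (Ig a ` S)" by blast
    qed
  next
    show "\<Union> (Ig a ` S) \<subseteq> {g \<in> ITs. a \<in> idom (isrc g)}" unfolding Ig_def by auto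
  qed
  have "\<Union> (Ig a ` S) \<in> F" using D eq by simp
  moreover have "\<And>U. U \<in> Ig a ` S \<Longrightarrow> openin XI U" using Ig_open aS by blast
  ultimately have "\<exists>U\<in>Ig a ` S. U \<in> F" using Fcp by blast
  then show ?thesis by auto
qed

lemma Ig_surj:
  assumes bN: "b \<in> idom N"
  shows "\<exists>a\<in>S. Ig a b \<in> F"
proof -
  have bS: "b \<in> S" using bN MSig_D(1)[OF NM] by blast
  have D: "{g \<in> ITs. b \<in> idom (itgt g)} \<in> F" using tgtP[OF open_dom[OF bS]] bN by blast
  have eq: "{g \<in> ITs. b \<in> idom (itgt g)} = \<Union> ((\<lambda>a. Ig a b) ` S)"
  proof
    show "{g \<in> ITs. b \<in> idom (itgt g)} \<subseteq> \<Union> ((\<lambda>a. Ig a b) ` S)"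
    proof
      fix g assume g: "g \<in> {g \<in> ITs. b \<in> idom (itgt g)}"
      then have gI: "g \<in> ITs" and bg: "b \<in> idom (itgt g)" by auto
      have "cls (itgt g) b \<in> univ (itgt g)" using cls_univ[OF gL[OF gI] bg] .
      then obtain X where X: "X \<in> univ (isrc g)" "imap g X = cls (itgt g) b"
        using bij_betw_imp_surj_on[OF iso_D(1)[OF giso[OF gI]]] by (metis imageE)
      define a where "a = rep X"
      have a: "a \<in> idom (isrc g)" "cls (isrc g) a = X" using rep_univ[OF gK[OF gI] X(1)] unfolding a_def by auto
      have "a \<in> S" using a MSig_D(1)[OF gK[OF gI]] by blast
      moreover have "g \<in> Ig a b" using gI bg a X unfolding Ig_def by auto
      ultimately show "g \<in> \<Union> ((\<lambda>a. Ig a b) ` S)" by blast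
    qed
  next
    show "\<Union> ((\<lambda>a. Ig a b) ` S) \<subseteq> {g \<in> ITs. b \<in> idom (itgt g)}" unfolding Ig_def by auto
  qed
  have "\<Union> ((\<lambda>a. Ig a b) ` S) \<in> F" using D eq by simp
  moreover have "\<And>U. U \<in> (\<lambda>a. Ig a b) ` S \<Longrightarrow> openin XI U" using Ig_open bS by blast
  ultimately have "\<exists>U\<in>(\<lambda>a. Ig a b) ` S. U \<in> F" using Fcp by blast
  then show ?thesis by auto
qed

lemma Ig_uniq:
  assumes A: "Ig a b \<in> F" and B: "Ig a' b' \<in> F" and aa: "(a, a') \<in> ieq M"
  shows "(b, b') \<in> ieq N"
proof -
  have S: "a \<in> S" "b \<in> S" "a' \<in> S" "b' \<in> S" using Ig_S A B by auto
  have Q: "{g \<in> ITs. a \<in> idom (isrc g) \<and> a' \<in> idom (isrc g) \<and> (a, a') \<in> ieq (isrc g)} \<in> F"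
    using srcP[OF open_eq[OF S(1,3)]] aa ieq_dom[OF MM] by blast
  have "Ig a b \<inter> Ig a' b' \<inter> {g \<in> ITs. a \<in> idom (isrc g) \<and> a' \<in> idom (isrc g) \<and> (a, a') \<in> ieq (isrc g)}
     \<subseteq> {g \<in> ITs. b \<in> idom (itgt g) \<and> b' \<in> idom (itgt g) \<and> (b, b') \<in> ieq (itgt g)}"
  proof
    fix g assume g: "g \<in> Ig a b \<inter> Ig a' b' \<inter> {g \<in> ITs. a \<in> idom (isrc g) \<and> a' \<in> idom (isrc g) \<and> (a, a') \<in> ieq (isrc g)}"
    then have gI: "g \<in> ITs" by auto
    have "cls (isrc g) a = cls (isrc g) a'" using g cls_eq_iff[OF gK[OF gI]] by auto
    then have "cls (itgt g) b = cls (itgt g) b'" using g unfolding Ig_def by auto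
    then show "g \<in> {g \<in> ITs. b \<in> idom (itgt g) \<and> b' \<in> idom (itgt g) \<and> (b, b') \<in> ieq (itgt g)}"
      using g cls_eq_iff[OF gL[OF gI]] unfolding Ig_def by auto
  qed
  then have "{g \<in> ITs. b \<in> idom (itgt g) \<and> b' \<in> idom (itgt g) \<and> (b, b') \<in> ieq (itgt g)} \<in> F"
    using Fup[OF Fint[OF Fint[OF A B] Q]] oTgt[OF open_eq[OF S(2,4)]] by blast
  then show ?thesis using tgtP[OF open_eq[OF S(2,4)]] by blast
qed

lemma Ig_inj:
  assumes A: "Ig a b \<in> F" and B: "Ig a' b \<in> F"
  shows "(a, a') \<in> ieq M"
proof -
  have S: "a \<in> S" "b \<in> S" "a' \<in> S" using Ig_S A B by auto
  have "Ig a b \<inter> Ig a' b \<subseteq> {g \<in> ITs. a \<in> idom (isrc g) \<and> a' \<in> idom (isrc g) \<and> (a, a') \<in> ieq (isrc g)}"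
  proof
    fix g assume g: "g \<in> Ig a b \<inter> Ig a' b"
    then have gI: "g \<in> ITs" and d: "a \<in> idom (isrc g)" "a' \<in> idom (isrc g)" unfolding Ig_def by auto
    have e: "imap g (cls (isrc g) a) = imap g (cls (isrc g) a')" using g unfolding Ig_def by auto
    have "inj_on (imap g) (univ (isrc g))" using iso_D(1)[OF giso[OF gI]] by (rule bij_betw_imp_inj_on)
    then have "cls (isrc g) a = cls (isrc g) a'"
      using e cls_univ[OF gK[OF gI] d(1)] cls_univ[OF gK[OF gI] d(2)] by (rule inj_onD)
    then show "g \<in> {g \<in> ITs. a \<in> idom (isrc g) \<and> a' \<in> idom (isrc g) \<and> (a, a') \<in> ieq (isrc g)}"
      using gI d cls_eq_iff[OF gK[OF gI]] by auto
  qed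
  then have "{g \<in> ITs. a \<in> idom (isrc g) \<and> a' \<in> idom (isrc g) \<and> (a, a') \<in> ieq (isrc g)} \<in> F"
    using Fup[OF Fint[OF A B]] oSrc[OF open_eq[OF S(1,3)]] by blast
  then show ?thesis using srcP[OF open_eq[OF S(1,3)]] by blast
qed

lemma Ig_trans:
  assumes A: "Ig a b \<in> F" and aa: "(a, a') \<in> ieq M" and bb: "(b, b') \<in> ieq N"
  shows "Ig a' b' \<in> F"
proof -
  have dM: "a \<in> idom M" "a' \<in> idom M" using ieq_dom[OF MM aa] by auto
  have dN: "b \<in> idom N" "b' \<in> idom N" using ieq_dom[OF NM bb] by auto
  have S: "a \<in> S" "a' \<in> S" "b \<in> S" "b' \<in> S" using dM dN MSig_D(1)[OF MM] MSig_D(1)[OF NM] by auto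
  have Q1: "{g \<in> ITs. a \<in> idom (isrc g) \<and> a' \<in> idom (isrc g) \<and> (a, a') \<in> ieq (isrc g)} \<in> F"
    using srcP[OF open_eq[OF S(1,2)]] aa dM by blast
  have Q2: "{g \<in> ITs. b \<in> idom (itgt g) \<and> b' \<in> idom (itgt g) \<and> (b, b') \<in> ieq (itgt g)} \<in> F"
    using tgtP[OF open_eq[OF S(3,4)]] bb dN by blast
  have "Ig a b \<inter> {g \<in> ITs. a \<in> idom (isrc g) \<and> a' \<in> idom (isrc g) \<and> (a, a') \<in> ieq (isrc g)}
     \<inter> {g \<in> ITs. b \<in> idom (itgt g) \<and> b' \<in> idom (itgt g) \<and> (b, b') \<in> ieq (itgt g)} \<subseteq> Ig a' b'"
  proof
    fix g assume g: "g \<in> Ig a b \<inter> {g \<in> ITs. a \<in> idom (isrc g) \<and> a' \<in> idom (isrc g) \<and> (a, a') \<in> ieq (isrc g)}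
     \<inter> {g \<in> ITs. b \<in> idom (itgt g) \<and> b' \<in> idom (itgt g) \<and> (b, b') \<in> ieq (itgt g)}"
    then have gI: "g \<in> ITs" by auto
    have "cls (isrc g) a = cls (isrc g) a'" using g cls_eq_iff[OF gK[OF gI]] by auto
    moreover have "cls (itgt g) b = cls (itgt g) b'" using g cls_eq_iff[OF gL[OF gI]] by auto
    ultimately show "g \<in> Ig a' b'" using g unfolding Ig_def by auto
  qed
  then show ?thesis using Fup[OF Fint[OF Fint[OF A Q1] Q2]] Ig_open[OF S(2,4)] by blast
qed

definition hsel where "hsel a = (SOME b. b \<in> S \<and> Ig a b \<in> F)"

lemma hsel: assumes "a \<in> idom M" shows "hsel a \<in> S \<and> Ig a (hsel a) \<in> F"
proof -
  obtain b where "b \<in> S \<and> Ig a b \<in> F" using Ig_ex[OF assms] by blast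
  then show ?thesis unfolding hsel_def by (rule someI)
qed

lemma hsel_N: "a \<in> idom M \<Longrightarrow> hsel a \<in> idom N"
  using hsel Ig_dom by blast

definition h where "h X = (if X \<in> univ M then cls N (hsel (rep X)) else {})"

lemma rep_M: "X \<in> univ M \<Longrightarrow> rep X \<in> idom M \<and> cls M (rep X) = X"
  using rep_univ[OF MM] by blast

lemma h_univ: "X \<in> univ M \<Longrightarrow> h X \<in> univ N"
  unfolding h_def using cls_univ[OF NM hsel_N] rep_M by auto

lemma h_char:
  assumes S: "a \<in> S" "b \<in> S"
  shows "Ig a b \<in> F \<longleftrightarrow> a \<in> idom M \<and> b \<in> idom N \<and> h (cls M a) = cls N b"
proof
  assume A: "Ig a b \<in> F"
  have d: "a \<in> idom M" "b \<in> idom N" using Ig_dom[OF A] by auto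
  define a'' where "a'' = rep (cls M a)"
  have u: "cls M a \<in> univ M" using cls_univ[OF MM d(1)] .
  have a'': "a'' \<in> idom M" "cls M a'' = cls M a" using rep_M[OF u] unfolding a''_def by auto
  have aa: "(a, a'') \<in> ieq M" using a'' d cls_eq_iff[OF MM] by metis
  have "(b, hsel a'') \<in> ieq N" using Ig_uniq[OF A _ aa] hsel[OF a''(1)] by blast
  then have "cls N b = cls N (hsel a'')" using cls_eq_iff[OF NM] d hsel_N[OF a''(1)] by blast
  then show "a \<in> idom M \<and> b \<in> idom N \<and> h (cls M a) = cls N b" using d u unfolding h_def a''_def by simp
next
  assume H: "a \<in> idom M \<and> b \<in> idom N \<and> h (cls M a) = cls N b"
  define a'' where "a'' = rep (cls M a)"
  have u: "cls M a \<in> univ M" using cls_univ[OF MM] H by blast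
  have a'': "a'' \<in> idom M" "cls M a'' = cls M a" using rep_M[OF u] unfolding a''_def by auto
  have aa: "(a'', a) \<in> ieq M" using a'' H cls_eq_iff[OF MM] by metis
  have "cls N (hsel a'') = cls N b" using H u unfolding h_def a''_def by simp
  then have bb: "(hsel a'', b) \<in> ieq N" using cls_eq_iff[OF NM] H hsel_N[OF a''(1)] by blast
  show "Ig a b \<in> F" using Ig_trans[OF _ aa bb] hsel[OF a''(1)] by blast
qed

end


context IF begin

definition Igs where "Igs as bs = {g \<in> ITs. set as \<subseteq> idom (isrc g) \<and> set bs \<subseteq> idom (itgt g) \<and>
   map (imap g) (map (cls (isrc g)) as) = map (cls (itgt g)) bs}"

lemma Igs_F: "set as \<subseteq> idom M \<Longrightarrow> Igs as (map hsel as) \<in> F"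
proof (induction as)
  case Nil
  have "Igs [] [] = ITs" unfolding Igs_def by simp
  then show ?case using IT_F by simp
next
  case (Cons a as)
  have "Igs (a # as) (map hsel (a # as)) = Ig a (hsel a) \<inter> Igs as (map hsel as)"
    unfolding Igs_def Ig_def by auto
  then show ?case using Fint hsel Cons by auto
qed

lemma h_iso: "is_iso arR arF M N h"
proof -
  have inj: "inj_on h (univ M)"
  proof (rule inj_onI)
    fix X Y assume X: "X \<in> univ M" and Y: "Y \<in> univ M" and e: "h X = h Y"
    define a where "a = rep X"
    define a' where "a' = rep Y"
    have a: "a \<in> idom M" "cls M a = X" using rep_M[OF X] unfolding a_def by auto
    have a': "a' \<in> idom M" "cls M a' = Y" using rep_M[OF Y] unfolding a'_def by auto
    have "cls N (hsel a) = cls N (hsel a')" using e X Y unfolding h_def a_def a'_def by simp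
    then have bb: "(hsel a', hsel a) \<in> ieq N" using cls_eq_iff[OF NM] hsel_N a a' by metis
    have refl: "(a', a') \<in> ieq M" using a' MSig_D(2)[OF MM] unfolding equiv_def refl_on_def by blast
    have "Ig a' (hsel a) \<in> F" using Ig_trans[OF _ refl bb] hsel[OF a'(1)] by blast
    then have "(a, a') \<in> ieq M" using Ig_inj hsel[OF a(1)] by blast
    then show "X = Y" using a a' cls_eq_iff[OF MM] by metis
  qed
  have img: "h ` univ M = univ N"
  proof
    show "h ` univ M \<subseteq> univ N" using h_univ by blast
  next
    show "univ N \<subseteq> h ` univ M"
    proof
      fix Y assume Y: "Y \<in> univ N"
      define b where "b = rep Y"
      have b: "b \<in> idom N" "cls N b = Y" using rep_univ[OF NM Y] unfolding b_def by auto
      obtain a where a: "a \<in> S" "Ig a b \<in> F" using Ig_surj[OF b(1)] by blast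
      have bS: "b \<in> S" using b MSig_D(1)[OF NM] by blast
      have "a \<in> idom M" "h (cls M a) = cls N b" using h_char[OF a(1) bS] a(2) by auto
      then show "Y \<in> h ` univ M" using b cls_univ[OF MM] by (metis imageI)
    qed
  qed
  have out: "\<And>x. x \<notin> univ M \<Longrightarrow> h x = {}" unfolding h_def by simp
  have reps: "set (map rep xs) \<subseteq> idom M \<and> map (cls M) (map rep xs) = xs
      \<and> set (map hsel (map rep xs)) \<subseteq> idom N \<and> map h xs = map (cls N) (map hsel (map rep xs))
      \<and> set (map rep xs) \<subseteq> S \<and> set (map hsel (map rep xs)) \<subseteq> S"
    if u: "set xs \<subseteq> univ M" for xs
  proof -
    have 1: "set (map rep xs) \<subseteq> idom M" using rep_M u by auto
    have 2: "map (cls M) (map rep xs) = xs" unfolding map_map by (rule map_idI) (use rep_M u in auto)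
    have 3: "set (map hsel (map rep xs)) \<subseteq> idom N" using 1 hsel_N by auto
    have 4: "map h xs = map (cls N) (map hsel (map rep xs))"
      unfolding map_map by (rule map_cong) (use u in \<open>auto simp: h_def\<close>)
    show ?thesis using 1 2 3 4 MSig_D(1)[OF MM] MSig_D(1)[OF NM] by blast
  qed
  have rel: "xs \<in> irel M r \<longleftrightarrow> map h xs \<in> irel N r"
    if l: "length xs = arR r" and u: "set xs \<subseteq> univ M" for r xs
  proof -
    define as where "as = map rep xs"
    define bs where "bs = map hsel as"
    note R = reps[OF u, folded as_def, folded bs_def]
    have la: "length as = arR r" "length bs = arR r" using l unfolding as_def bs_def by auto
    let ?A = "{g \<in> ITs. set as \<subseteq> idom (isrc g) \<and> map (cls (isrc g)) as \<in> irel (isrc g) r}"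
    let ?B = "{g \<in> ITs. set bs \<subseteq> idom (itgt g) \<and> map (cls (itgt g)) bs \<in> irel (itgt g) r}"
    have I: "Igs as bs \<in> F" unfolding bs_def using Igs_F R by blast
    have oRa: "openin (MSig_top S arR arF) {K \<in> MSig S arR arF. set as \<subseteq> idom K \<and> map (cls K) as \<in> irel K r}"
      by (rule open_rel) (use R la in auto)
    have oRb: "openin (MSig_top S arR arF) {K \<in> MSig S arR arF. set bs \<subseteq> idom K \<and> map (cls K) bs \<in> irel K r}"
      by (rule open_rel) (use R la in auto)
    have oA: "openin XI ?A" using oSrc[OF oRa] .
    have oB: "openin XI ?B" using oTgt[OF oRb] .
    have eq: "?A \<inter> Igs as bs = ?B \<inter> Igs as bs"
    proof -
      have "map (cls (isrc g)) as \<in> irel (isrc g) r \<longleftrightarrow> map (cls (itgt g)) bs \<in> irel (itgt g) r"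
        if g: "g \<in> Igs as bs" for g
      proof -
        have gI: "g \<in> ITs" and d: "set as \<subseteq> idom (isrc g)"
          and m: "map (imap g) (map (cls (isrc g)) as) = map (cls (itgt g)) bs" using g unfolding Igs_def by auto
        have "set (map (cls (isrc g)) as) \<subseteq> univ (isrc g)" using cls_univ[OF gK[OF gI]] d by auto
        then show ?thesis using iso_D(3)[OF giso[OF gI], of "map (cls (isrc g)) as" r] la(1) m by simp
      qed
      then show ?thesis unfolding Igs_def by blast
    qed
    have "?A \<in> F \<longleftrightarrow> ?B \<in> F" by (rule swapF[OF cpf I oA oB eq])
    moreover have "?A \<in> F \<longleftrightarrow> set as \<subseteq> idom M \<and> map (cls M) as \<in> irel M r"
      using srcP[OF oRa] R by blast
    moreover have "?B \<in> F \<longleftrightarrow> set bs \<subseteq> idom N \<and> map (cls N) bs \<in> irel N r"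
      using tgtP[OF oRb] R by blast
    ultimately show ?thesis using R by simp
  qed
  have fn: "h (ifun M f xs) = ifun N f (map h xs)"
    if l: "length xs = arF f" and u: "set xs \<subseteq> univ M" for f xs
  proof -
    define as where "as = map rep xs"
    define bs where "bs = map hsel as"
    note R = reps[OF u, folded as_def, folded bs_def]
    have la: "length as = arF f" "length bs = arF f" using l unfolding as_def bs_def by auto
    have u0: "ifun M f xs \<in> univ M" using MSig_D(4)[OF MM l u] .
    define a0 where "a0 = rep (ifun M f xs)"
    have a0: "a0 \<in> idom M" "cls M a0 = ifun M f xs" using rep_M[OF u0] unfolding a0_def by auto
    define b0 where "b0 = hsel a0"
    have hu0: "h (ifun M f xs) = cls N b0" using u0 unfolding h_def b0_def a0_def by simp
    have b0: "b0 \<in> S" "Ig a0 b0 \<in> F" "b0 \<in> idom N" using hsel[OF a0(1)] hsel_N[OF a0(1)] unfolding b0_def by auto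
    have uN: "set (map (cls N) bs) \<subseteq> univ N" using cls_univ[OF NM] R by auto
    have u1: "ifun N f (map (cls N) bs) \<in> univ N" using MSig_D(4)[OF NM _ uN] la(2) by simp
    define b1 where "b1 = rep (ifun N f (map (cls N) bs))"
    have b1: "b1 \<in> idom N" "cls N b1 = ifun N f (map (cls N) bs)" using rep_univ[OF NM u1] unfolding b1_def by auto
    have a0S: "a0 \<in> S" "b1 \<in> S" using a0 b1 MSig_D(1)[OF MM] MSig_D(1)[OF NM] by auto
    let ?A = "{g \<in> ITs. set as \<subseteq> idom (isrc g) \<and> a0 \<in> idom (isrc g) \<and> ifun (isrc g) f (map (cls (isrc g)) as) = cls (isrc g) a0}"
    let ?B = "{g \<in> ITs. set bs \<subseteq> idom (itgt g) \<and> b1 \<in> idom (itgt g) \<and> ifun (itgt g) f (map (cls (itgt g)) bs) = cls (itgt g) b1}"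
    let ?C = "{g \<in> ITs. b0 \<in> idom (itgt g) \<and> b1 \<in> idom (itgt g) \<and> (b0, b1) \<in> ieq (itgt g)}"
    have oFa: "openin (MSig_top S arR arF) {K \<in> MSig S arR arF. set as \<subseteq> idom K \<and> a0 \<in> idom K \<and> ifun K f (map (cls K) as) = cls K a0}"
      by (rule open_fun) (use R la a0S in auto)
    have oFb: "openin (MSig_top S arR arF) {K \<in> MSig S arR arF. set bs \<subseteq> idom K \<and> b1 \<in> idom K \<and> ifun K f (map (cls K) bs) = cls K b1}"
      by (rule open_fun) (use R la a0S in auto)
    have A: "?A \<in> F" using srcP[OF oFa] R a0 by auto
    have B: "?B \<in> F" using tgtP[OF oFb] R b1 by auto
    have I: "Igs as bs \<in> F" unfolding bs_def using Igs_F R by blast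
    have "?A \<inter> ?B \<inter> Igs as bs \<inter> Ig a0 b0 \<subseteq> ?C"
    proof
      fix g assume g: "g \<in> ?A \<inter> ?B \<inter> Igs as bs \<inter> Ig a0 b0"
      then have gI: "g \<in> ITs" and d: "set as \<subseteq> idom (isrc g)" by auto
      have m: "map (imap g) (map (cls (isrc g)) as) = map (cls (itgt g)) bs" using g unfolding Igs_def by auto
      have us: "set (map (cls (isrc g)) as) \<subseteq> univ (isrc g)" using cls_univ[OF gK[OF gI]] d by auto
      have "cls (itgt g) b0 = imap g (cls (isrc g) a0)" using g unfolding Ig_def by auto
      also have "\<dots> = imap g (ifun (isrc g) f (map (cls (isrc g)) as))" using g by auto
      also have "\<dots> = ifun (itgt g) f (map (imap g) (map (cls (isrc g)) as))"
        using iso_D(4)[OF giso[OF gI] _ us] la(1) by simp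
      also have "\<dots> = cls (itgt g) b1" using m g by auto
      finally have "cls (itgt g) b0 = cls (itgt g) b1" .
      then show "g \<in> ?C" using g cls_eq_iff[OF gL[OF gI]] unfolding Ig_def by auto
    qed
    then have "?C \<in> F" using Fup[OF Fint[OF Fint[OF Fint[OF A B] I] b0(2)]] oTgt[OF open_eq[OF b0(1) a0S(2)]] by blast
    then have "(b0, b1) \<in> ieq N" using tgtP[OF open_eq[OF b0(1) a0S(2)]] by blast
    then have "cls N b0 = cls N b1" using cls_eq_iff[OF NM] b0(3) b1(1) by blast
    then show ?thesis using hu0 b1(2) R by simp
  qed
  have c1: "bij_betw h (univ M) (univ N)" unfolding bij_betw_def using inj img by (intro conjI)
  have c2: "\<forall>x. x \<notin> univ M \<longrightarrow> h x = {}" using out by blast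
  have c3: "\<forall>r xs. length xs = arR r \<and> set xs \<subseteq> univ M \<longrightarrow> (xs \<in> irel M r \<longleftrightarrow> map h xs \<in> irel N r)"
    using rel by blast
  have c4: "\<forall>f xs. length xs = arF f \<and> set xs \<subseteq> univ M \<longrightarrow> h (ifun M f xs) = ifun N f (map h xs)"
    using fn by blast
  show ?thesis unfolding is_iso_def using c1 c2 c3 c4 by (intro conjI)
qed

definition g0 :: "('s, 'r, 'f) iiso" where "g0 = \<lparr>isrc = M, itgt = N, imap = h\<rparr>"

lemma g0_IT: "g0 \<in> ITs"
  unfolding g0_def IT_def ISig_on_def using MMT NMT h_iso by simp

lemma gen_charI:
  assumes G: "G \<in> BI S arR arF"
  shows "G \<inter> ITs \<in> F \<longleftrightarrow> g0 \<in> G"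
proof -
  have g0S: "g0 \<in> ISig S arR arF" using g0_IT IT_sub by blast
  from G show ?thesis
  proof (cases rule: BI_cases)
    case 1
    have "ISig S arR arF \<inter> ITs = ITs" using IT_sub by blast
    then show ?thesis using 1 IT_F g0S by simp
  next
    case (2 U)
    have eq: "G \<inter> ITs = {g \<in> ITs. isrc g \<in> U \<inter> MTs}" using 2 IT_sub IT_D by blast
    have "openin (subtopology (MSig_top S arR arF) MTs) (U \<inter> MTs)" using 2 by (simp add: openin_subtopology_Int)
    then have "G \<inter> ITs \<in> F \<longleftrightarrow> M \<in> U \<inter> MTs" unfolding eq by (rule src)
    then show ?thesis using MMT 2 g0S unfolding g0_def by auto
  next
    case (3 U)
    have eq: "G \<inter> ITs = {g \<in> ITs. itgt g \<in> U \<inter> MTs}" using 3 IT_sub IT_D by blast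
    have "openin (subtopology (MSig_top S arR arF) MTs) (U \<inter> MTs)" using 3 by (simp add: openin_subtopology_Int)
    then have "G \<inter> ITs \<in> F \<longleftrightarrow> N \<in> U \<inter> MTs" unfolding eq by (rule tgt)
    then show ?thesis using NMT 3 g0S unfolding g0_def by auto
  next
    case (4 a b)
    have eq: "G \<inter> ITs = Ig a b" using 4 IT_sub unfolding Ig_def by blast
    show ?thesis unfolding eq h_char[OF 4(1,2)] using 4 g0S unfolding g0_def by auto
  qed
qed

end

lemma T0_ISig:
  assumes g: "g \<in> IT S arR arF T" and g': "g' \<in> IT S arR arF T"
    and ag: "\<forall>G\<in>BI S arR arF. g \<in> G \<longleftrightarrow> g' \<in> G"
  shows "g = g'"
proof -
  have gS: "g \<in> ISig S arR arF" "g' \<in> ISig S arR arF" using g g' IT_sub by blast+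
  have K: "isrc g \<in> MSig S arR arF" "isrc g' \<in> MSig S arR arF" "itgt g \<in> MSig S arR arF" "itgt g' \<in> MSig S arR arF"
    using IT_D g g' MT_sub by blast+
  have oG: "openin (MSig_top S arR arF) G" if "G \<in> BM S arR arF" for G
    unfolding MSig_top_BM using that by (rule topology_generated_by_Basis)
  have "\<forall>G\<in>BM S arR arF. isrc g \<in> G \<longleftrightarrow> isrc g' \<in> G"
  proof
    fix G assume G: "G \<in> BM S arR arF"
    have "g \<in> {x \<in> ISig S arR arF. isrc x \<in> G} \<longleftrightarrow> g' \<in> {x \<in> ISig S arR arF. isrc x \<in> G}"
      using bspec[OF ag BI_src[OF oG[OF G]]] .
    then show "isrc g \<in> G \<longleftrightarrow> isrc g' \<in> G" using gS by simp
  qed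
  then have src: "isrc g = isrc g'" using T0_MSig[OF K(1,2)] by blast
  have "\<forall>G\<in>BM S arR arF. itgt g \<in> G \<longleftrightarrow> itgt g' \<in> G"
  proof
    fix G assume G: "G \<in> BM S arR arF"
    have "g \<in> {x \<in> ISig S arR arF. itgt x \<in> G} \<longleftrightarrow> g' \<in> {x \<in> ISig S arR arF. itgt x \<in> G}"
      using bspec[OF ag BI_tgt[OF oG[OF G]]] .
    then show "itgt g \<in> G \<longleftrightarrow> itgt g' \<in> G" using gS by simp
  qed
  then have tgt: "itgt g = itgt g'" using T0_MSig[OF K(3,4)] by blast
  have iso: "is_iso arR arF (isrc g) (itgt g) (imap g)" "is_iso arR arF (isrc g') (itgt g') (imap g')"
    using IT_D g g' by blast+
  have "imap g X = imap g' X" for X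
  proof (cases "X \<in> univ (isrc g)")
    case True
    define a where "a = rep X"
    have a: "a \<in> idom (isrc g)" "cls (isrc g) a = X" using rep_univ[OF K(1) True] unfolding a_def by auto
    have u: "imap g X \<in> univ (itgt g)" using iso_D(1)[OF iso(1)] True bij_betwE by blast
    define b where "b = rep (imap g X)"
    have b: "b \<in> idom (itgt g)" "cls (itgt g) b = imap g X" using rep_univ[OF K(3) u] unfolding b_def by auto
    have S: "a \<in> S" "b \<in> S" using a b MSig_D(1)[OF K(1)] MSig_D(1)[OF K(3)] by auto
    have "g \<in> {x \<in> ISig S arR arF. a \<in> idom (isrc x) \<and> b \<in> idom (itgt x) \<and> imap x (cls (isrc x) a) = cls (itgt x) b}"
      using gS a b by simp
    then have "g' \<in> {x \<in> ISig S arR arF. a \<in> idom (isrc x) \<and> b \<in> idom (itgt x) \<and> imap x (cls (isrc x) a) = cls (itgt x) b}"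
      using bspec[OF ag BI_ig[OF S]] by blast
    then show ?thesis using a b src tgt by simp
  next
    case False
    then show ?thesis using iso_D(2)[OF iso(1)] iso_D(2)[OF iso(2)] src by metis
  qed
  then have "imap g = imap g'" by (rule ext)
  then show ?thesis using src tgt by (cases g, cases g') simp
qed

theorem sober_IT:
  assumes geo: "geometric_theory arR arF T"
  shows "sober (subtopology (ISig_top S arR arF) (IT S arR arF T))"
  unfolding ISig_top_BI
proof (rule sober_generated)
  show "IT S arR arF T \<subseteq> \<Union> (BI S arR arF)" using IT_sub BI_top by blast
next
  fix x y assume x: "x \<in> IT S arR arF T" and y: "y \<in> IT S arR arF T"
    and ag: "\<forall>G\<in>BI S arR arF. x \<in> G \<longleftrightarrow> y \<in> G"
  show "x = y" by (rule T0_ISig[OF x y ag])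
next
  fix F assume cF: "completely_prime_filter (subtopology (topology_generated_by (BI S arR arF)) (IT S arR arF T)) F"
  have cF': "completely_prime_filter (subtopology (ISig_top S arR arF) (IT S arR arF T)) F"
    using cF unfolding ISig_top_BI .
  obtain M where M: "M \<in> MT S arR arF T" "\<forall>U. openin (subtopology (MSig_top S arR arF) (MT S arR arF T)) U \<longrightarrow>
     ({g \<in> IT S arR arF T. isrc g \<in> U} \<in> F \<longleftrightarrow> M \<in> U)"
    using push_point[OF geo cF', of isrc] IT_D(1) open_srcI by blast
  obtain N where N: "N \<in> MT S arR arF T" "\<forall>U. openin (subtopology (MSig_top S arR arF) (MT S arR arF T)) U \<longrightarrow>
     ({g \<in> IT S arR arF T. itgt g \<in> U} \<in> F \<longleftrightarrow> N \<in> U)"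
    using push_point[OF geo cF', of itgt] IT_D(2) open_tgtI by blast
  interpret IF S arR arF T F M N
    by (rule IF.intro[OF cF' M(1) N(1)]) (use M(2) N(2) in blast)+
  show "\<exists>x\<in>IT S arR arF T. \<forall>G\<in>BI S arR arF. G \<inter> IT S arR arF T \<in> F \<longleftrightarrow> x \<in> G"
  proof (rule bexI[of _ g0])
    show "g0 \<in> IT S arR arF T" by (rule g0_IT)
    show "\<forall>G\<in>BI S arR arF. G \<inter> IT S arR arF T \<in> F \<longleftrightarrow> g0 \<in> G" using gen_charI by blast
  qed
qed


theorem proposition2p6:
  fixes S :: "'s set" and arR :: "'r \<Rightarrow> nat" and arF :: "'f \<Rightarrow> nat"
    and T :: "('r, 'f, 'i) gseq set"
  assumes "infinite S"
    and "\<exists>g :: 'r + 'f \<Rightarrow> 's. inj g \<and> range g \<subseteq> S"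
    and "geometric_theory arR arF T"
  shows "sober (subtopology (MSig_top S arR arF) (MT S arR arF T)) \<and>
         sober (subtopology (ISig_top S arR arF) (IT S arR arF T))"
  using sober_MT[OF assms(3)] sober_IT[OF assms(3)] by (rule conjI)

end
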